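(* Let $v_i:\mathbb{R}\to\mathbb{C}$ be smooth with $\mathrm{supp}(v_i)\subseteq[-r,r]$, $\sup_t|v_i(t)|\le C_0$ and $\sup_t|\partial_t^{j_{\max}+1}v_i(t)|\le D_{j_{\max}+1}$. Let $0<\eta\le1$ and $j_{\max}\in\mathbb{N}_0$, and let $K_i^{(-,+)}$, $\tilde K_i^{(-,+)}$ be as in the context. Then for all $s,s'$, $$|\tilde K_i^{(-,+)}(s,s')-K_i^{(-,+)}(s,s')|\le\frac{2\eta^{j_{\max}+1}D_{j_{\max}+1}C_0r}{(j_{\max}+1)!},$$ for all $t>0$, $$\int_0^t\!\!\int_0^t|\tilde K_i^{(-,+)}(s,s')-K_i^{(-,+)}(s,s')|\,ds\,ds'\le4t\eta^{j_{\max}+1}D_{j_{\max}+1}\frac{2r+\eta}{(j_{\max}+1)!}C_0r,$$ and for all $s$, $$\int_{-\infty}^\infty|\tilde K_i^{(-,+)}(s,s')|\,ds'\le2C_0^2(j_{\max}+1)(2r+1)^2 .$$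
   Context: Discretization: for $n\in\mathbb{Z}$ and $j\ge0$ let $P_j^n(s)=\sqrt{(2j+1)/\eta}\,L_j\big(2\frac{s-n\eta}{\eta}-1\big)$ for $s\in[n\eta,(n+1)\eta)$ and $P_j^n(s)=0$ otherwise, where $L_j$ is the $j$-th Legendre polynomial (so $\int P_j^nP_{j'}^{n'}=\delta_{nn'}\delta_{jj'}$). Define $C_{i,j}^n(t)=\int_{n\eta}^{(n+1)\eta}v_i(t-s)P_j^n(s)\,ds$. The original (vacuum) memory kernel is $K_i^{(-,+)}(s,s')=\int_{-\infty}^\infty v_i(s-\tau)v_i^*(s'-\tau)\,d\tau$ and the discretized kernel is $\tilde K_i^{(-,+)}(s,s')=\sum_{n\in\mathbb{Z}}\sum_{j=0}^{j_{\max}}C_{i,j}^n(s)C_{i,j}^{n*}(s')$. *)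

theory Defs
  imports "HOL-Analysis.Analysis"
begin

fun legendre :: "nat \<Rightarrow> real \<Rightarrow> real" where
  "legendre 0 x = 1"
| "legendre (Suc 0) x = x"
| "legendre (Suc (Suc n)) x =
     ((2 * real n + 3) * x * legendre (Suc n) x - (real n + 1) * legendre n x) / (real n + 2)"

definition nderiv :: "nat \<Rightarrow> (real \<Rightarrow> complex) \<Rightarrow> real \<Rightarrow> complex" where
  "nderiv k f = ((\<lambda>g t. vector_derivative g (at t)) ^^ k) f"

definition smooth_fun :: "(real \<Rightarrow> complex) \<Rightarrow> bool" where
  "smooth_fun f \<longleftrightarrow> (\<forall>k t. nderiv k f differentiable (at t))"

definition Pbasis :: "real \<Rightarrow> int \<Rightarrow> nat \<Rightarrow> real \<Rightarrow> real" where
  "Pbasis \<eta> n j s =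
     (if of_int n * \<eta> \<le> s \<and> s < (of_int n + 1) * \<eta>
      then sqrt ((2 * real j + 1) / \<eta>) * legendre j (2 * ((s - of_int n * \<eta>) / \<eta>) - 1)
      else 0)"

definition Ccoef :: "(real \<Rightarrow> complex) \<Rightarrow> real \<Rightarrow> int \<Rightarrow> nat \<Rightarrow> real \<Rightarrow> complex" where
  "Ccoef v \<eta> n j t =
     integral {of_int n * \<eta> .. (of_int n + 1) * \<eta>} (\<lambda>s. v (t - s) * complex_of_real (Pbasis \<eta> n j s))"

definition Kvac :: "(real \<Rightarrow> complex) \<Rightarrow> real \<Rightarrow> real \<Rightarrow> complex" where
  "Kvac v s s' = integral UNIV (\<lambda>\<tau>. v (s - \<tau>) * cnj (v (s' - \<tau>)))"

definition Kdisc :: "(real \<Rightarrow> complex) \<Rightarrow> real \<Rightarrow> nat \<Rightarrow> real \<Rightarrow> real \<Rightarrow> complex" where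
  "Kdisc v \<eta> jmax s s' =
     (\<Sum>\<^sub>\<infinity>n::int. \<Sum>j\<le>jmax. Ccoef v \<eta> n j s * cnj (Ccoef v \<eta> n j s'))"

end

theory Submission
  imports Defs
begin

fun dleg :: "nat \<Rightarrow> real \<Rightarrow> real" where
  "dleg 0 x = 0"
| "dleg (Suc n) x = x * dleg n x + real (Suc n) * legendre n x"

lemma legendre_rec:
  "(real n + 2) * legendre (Suc (Suc n)) x =
     (2 * real n + 3) * x * legendre (Suc n) x - (real n + 1) * legendre n x"
proof -
  have "real n + 2 \<noteq> 0" by simp
  then show ?thesis by (simp add: field_simps)
qed

lemma dleg_B: "x * dleg (Suc n) x - dleg n x = real (Suc n) * legendre (Suc n) x"
proof (induction n)
  case 0 then show ?case by simp
next
  case (Suc n)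
  have E: "(x^2 - 1) * dleg (Suc n) x = real (Suc n) * (x * legendre (Suc n) x - legendre n x)"
  proof -
    have "(x^2 - 1) * dleg (Suc n) x = x * (x * dleg (Suc n) x) - dleg (Suc n) x"
      by (simp add: algebra_simps power2_eq_square)
    also have "\<dots> = x * (dleg n x + real (Suc n) * legendre (Suc n) x) - (x * dleg n x + real (Suc n) * legendre n x)"
      using Suc by (simp add: algebra_simps)
    finally show ?thesis by (simp add: algebra_simps)
  qed
  have "x * dleg (Suc (Suc n)) x - dleg (Suc n) x
      = (x^2 - 1) * dleg (Suc n) x + real (Suc (Suc n)) * x * legendre (Suc n) x"
    by (simp add: algebra_simps power2_eq_square)
  also have "\<dots> = (2 * real n + 3) * x * legendre (Suc n) x - (real n + 1) * legendre n x"
    unfolding E by (simp add: algebra_simps)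
  also have "\<dots> = (real n + 2) * legendre (Suc (Suc n)) x"
    by (rule legendre_rec[symmetric])
  finally show ?case by (simp add: algebra_simps)
qed

lemma dleg_E: "(x^2 - 1) * dleg (Suc n) x = real (Suc n) * (x * legendre (Suc n) x - legendre n x)"
proof -
  have "(x^2 - 1) * dleg (Suc n) x = x * (x * dleg (Suc n) x) - dleg (Suc n) x"
    by (simp add: algebra_simps power2_eq_square)
  also have "\<dots> = x * (dleg n x + real (Suc n) * legendre (Suc n) x) - (x * dleg n x + real (Suc n) * legendre n x)"
    using dleg_B[of x n] by (simp add: algebra_simps)
  finally show ?thesis by (simp add: algebra_simps)
qed

lemma legendre_deriv: "(legendre n has_real_derivative dleg n x) (at x)"
proof (induction n x rule: legendre.induct)
  case (1 x) then show ?case by simp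
next
  case (2 x) then show ?case by (auto intro!: derivative_eq_intros)
next
  case (3 n x)
  define c where "c = 1 / (real n + 2)"
  have eq: "legendre (Suc (Suc n)) = (\<lambda>x. c * ((2 * real n + 3) * x * legendre (Suc n) x - (real n + 1) * legendre n x))"
    by (simp add: fun_eq_iff c_def)
  have "((\<lambda>x. c * ((2 * real n + 3) * x * legendre (Suc n) x - (real n + 1) * legendre n x))
     has_real_derivative c * ((2 * real n + 3) * (legendre (Suc n) x + x * dleg (Suc n) x) - (real n + 1) * dleg n x)) (at x)"
    by (auto intro!: derivative_eq_intros 3 simp del: dleg.simps simp: algebra_simps)
  moreover have "c * ((2 * real n + 3) * (legendre (Suc n) x + x * dleg (Suc n) x) - (real n + 1) * dleg n x)
      = dleg (Suc (Suc n)) x"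
  proof -
    have aux: "\<And>a cc d::real. x * cc = d + (real n + 1) * a \<Longrightarrow>
       c * ((2 * real n + 3) * (a + x * cc) - (real n + 1) * d) = x * cc + (real n + 2) * a"
      by (simp add: c_def field_simps)
    have "x * dleg (Suc n) x = dleg n x + (real n + 1) * legendre (Suc n) x"
      using dleg_B[of x n] by (simp del: dleg.simps add: algebra_simps)
    from aux[OF this] show ?thesis by (simp add: algebra_simps)
  qed
  ultimately show ?case unfolding eq by simp
qed

lemma legendre_cont: "continuous_on S (legendre n)"
  by (meson DERIV_continuous continuous_at_imp_continuous_on legendre_deriv)

lemma dleg_cont: "continuous_on S (dleg n)"
  by (induction n) (auto intro!: continuous_intros legendre_cont)


lemma gfun_deriv:
  "((\<lambda>x. (x^2 - 1) * dleg n x) has_real_derivative (real n * (real n + 1)) * legendre n x) (at x)"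
proof (cases n)
  case 0 then show ?thesis by simp
next
  case (Suc m)
  have eq: "(\<lambda>x. (x^2 - 1) * dleg n x) = (\<lambda>x. real (Suc m) * (x * legendre (Suc m) x - legendre m x))"
    using dleg_E Suc by (simp add: fun_eq_iff del: dleg.simps)
  have "((\<lambda>x. real (Suc m) * (x * legendre (Suc m) x - legendre m x)) has_real_derivative
     real (Suc m) * (1 * legendre (Suc m) x + x * dleg (Suc m) x - dleg m x)) (at x)"
    by (auto intro!: derivative_eq_intros legendre_deriv simp del: dleg.simps)
  moreover have "real (Suc m) * (1 * legendre (Suc m) x + x * dleg (Suc m) x - dleg m x)
     = (real n * (real n + 1)) * legendre n x"
    using dleg_B[of x m] Suc by (simp del: dleg.simps add: algebra_simps)
  ultimately show ?thesis unfolding eq by simp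
qed

lemma leg_orth_aux:
  "integral {-1..1} (\<lambda>x. dleg m x * ((x^2 - 1) * dleg n x))
   + real n * (real n + 1) * integral {-1..1} (\<lambda>x. legendre m x * legendre n x) = 0"
proof -
  define \<Phi> where "\<Phi> x = legendre m x * ((x^2 - 1) * dleg n x)" for x
  define \<Phi>' where "\<Phi>' x = dleg m x * ((x^2 - 1) * dleg n x) + legendre m x * ((real n * (real n + 1)) * legendre n x)" for x
  have d: "(\<Phi> has_real_derivative \<Phi>' x) (at x)" for x
  proof -
    have "(\<Phi> has_real_derivative (dleg m x * ((x^2 - 1) * dleg n x) + (real n * (real n + 1) * legendre n x) * legendre m x)) (at x)"
      unfolding \<Phi>_def by (rule DERIV_mult[OF legendre_deriv gfun_deriv])
    then show ?thesis unfolding \<Phi>'_def by (simp add: algebra_simps)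
  qed
  have "(\<Phi>' has_integral \<Phi> 1 - \<Phi> (-1)) {-1..1}"
    by (rule fundamental_theorem_of_calculus)
       (auto intro: has_field_derivative_at_within[OF d] simp: has_real_derivative_iff_has_vector_derivative[symmetric])
  then have "integral {-1..1} \<Phi>' = 0" by (simp add: \<Phi>_def integral_unique)
  moreover have "integral {-1..1} \<Phi>' = integral {-1..1} (\<lambda>x. dleg m x * ((x^2 - 1) * dleg n x))
   + real n * (real n + 1) * integral {-1..1} (\<lambda>x. legendre m x * legendre n x)"
  proof -
    have "integral {-1..1} \<Phi>' = integral {-1..1} (\<lambda>x. dleg m x * ((x^2 - 1) * dleg n x))
       + integral {-1..1} (\<lambda>x. (real n * (real n + 1)) * (legendre m x * legendre n x))"
      unfolding \<Phi>'_def
      by (subst integral_add[symmetric])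
         (auto intro!: integrable_continuous_interval continuous_intros legendre_cont dleg_cont simp: algebra_simps)
    then show ?thesis by simp
  qed
  ultimately show ?thesis by simp
qed

lemma leg_orth:
  assumes "m \<noteq> n"
  shows "integral {-1..1} (\<lambda>x. legendre m x * legendre n x) = 0"
proof -
  have a: "integral {-1..1} (\<lambda>x. dleg m x * ((x^2 - 1) * dleg n x))
   + real n * (real n + 1) * integral {-1..1} (\<lambda>x. legendre m x * legendre n x) = 0"
    by (rule leg_orth_aux)
  have b: "integral {-1..1} (\<lambda>x. dleg n x * ((x^2 - 1) * dleg m x))
   + real m * (real m + 1) * integral {-1..1} (\<lambda>x. legendre n x * legendre m x) = 0"
    by (rule leg_orth_aux)
  have c1: "(\<lambda>x. dleg n x * ((x^2 - 1) * dleg m x)) = (\<lambda>x. dleg m x * ((x^2 - 1) * dleg n x))"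
    by (simp add: fun_eq_iff algebra_simps)
  have c2: "(\<lambda>x. legendre n x * legendre m x) = (\<lambda>x. legendre m x * legendre n x)"
    by (simp add: fun_eq_iff algebra_simps)
  from a b have "(real n * (real n + 1) - real m * (real m + 1)) * integral {-1..1} (\<lambda>x. legendre m x * legendre n x) = 0"
    unfolding c1 c2 by (simp add: algebra_simps)
  moreover have "real n * (real n + 1) - real m * (real m + 1) = (real n - real m) * (real n + real m + 1)"
    by (simp add: algebra_simps)
  moreover have "(real n - real m) * (real n + real m + 1) \<noteq> 0" using assms by simp
  ultimately show ?thesis by simp
qed

lemma leg_integrable: "(\<lambda>x. f x * legendre m x * legendre n x) integrable_on {a..b}"
  if "continuous_on {a..b} f" for f :: "real \<Rightarrow> real"
  using that by (auto intro!: integrable_continuous_interval continuous_intros legendre_cont)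

lemma leg_rec_int:
  "(real n + 2) * integral {-1..1} (\<lambda>x. legendre (Suc (Suc n)) x * legendre k x)
   = (2 * real n + 3) * integral {-1..1} (\<lambda>x. x * legendre (Suc n) x * legendre k x)
     - (real n + 1) * integral {-1..1} (\<lambda>x. legendre n x * legendre k x)"
proof -
  have "(real n + 2) * integral {-1..1} (\<lambda>x. legendre (Suc (Suc n)) x * legendre k x)
     = integral {-1..1} (\<lambda>x. ((real n + 2) * legendre (Suc (Suc n)) x) * legendre k x)"
    by (simp only: integral_mult_right[symmetric] mult.assoc)
  also have "\<dots> = integral {-1..1} (\<lambda>x. (2 * real n + 3) * (x * legendre (Suc n) x * legendre k x)
        - (real n + 1) * (legendre n x * legendre k x))"
  proof -
    have pw: "((real n + 2) * legendre (Suc (Suc n)) x) * legendre k x =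
       (2 * real n + 3) * (x * legendre (Suc n) x * legendre k x) - (real n + 1) * (legendre n x * legendre k x)" for x
      by (simp only: legendre_rec) (simp add: algebra_simps)
    show ?thesis by (simp only: pw)
  qed
  also have "\<dots> = (2 * real n + 3) * integral {-1..1} (\<lambda>x. x * legendre (Suc n) x * legendre k x)
     - (real n + 1) * integral {-1..1} (\<lambda>x. legendre n x * legendre k x)"
    by (subst integral_diff)
       (auto intro!: integrable_continuous_interval continuous_intros legendre_cont)
  finally show ?thesis .
qed

lemma leg_norm: "integral {-1..1} (\<lambda>x. legendre n x * legendre n x) = 2 / (2 * real n + 1)"
proof -
  define N where "N n = integral {-1..1} (\<lambda>x. legendre n x * legendre n x)" for n
  define X where "X a b = integral {-1..1} (\<lambda>x. x * legendre a x * legendre b x)" for a b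
  have X1: "X (Suc n) n = (real n + 1) * N n / (2 * real n + 3)" for n
  proof -
    have "(real n + 2) * 0 = (2 * real n + 3) * X (Suc n) n - (real n + 1) * N n"
      using leg_rec_int[of n n, folded X_def N_def] leg_orth[of "Suc (Suc n)" n] by simp
    then show ?thesis by (simp add: field_simps)
  qed
  have Xsym: "X a b = X b a" for a b unfolding X_def by (simp add: algebra_simps)
  have step: "N (Suc (Suc n)) = (2 * real n + 3) * N (Suc n) / (2 * real n + 5)" for n
  proof -
    have "(real n + 2) * N (Suc (Suc n)) = (2 * real n + 3) * X (Suc n) (Suc (Suc n)) - (real n + 1) * 0"
      using leg_rec_int[of n "Suc (Suc n)", folded X_def N_def] leg_orth[of n "Suc (Suc n)"] by simp
    also have "X (Suc n) (Suc (Suc n)) = (real n + 2) * N (Suc n) / (2 * real n + 5)"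
      using X1[of "Suc n"] Xsym[of "Suc n" "Suc (Suc n)"] by (simp add: algebra_simps)
    finally have "(real n + 2) * N (Suc (Suc n)) = (real n + 2) * ((2 * real n + 3) * N (Suc n) / (2 * real n + 5))"
      by simp
    then show ?thesis by (rule mult_left_cancel[THEN iffD1, rotated]) simp
  qed
  have N0: "N 0 = 2" unfolding N_def by simp
  have N1: "N 1 = 2 / 3"
  proof -
    have "((\<lambda>x. x * x) has_integral (1^3/3 - (-1)^3/3)) {-1..1::real}"
      by (rule fundamental_theorem_of_calculus)
         (auto intro!: derivative_eq_intros simp: has_real_derivative_iff_has_vector_derivative[symmetric]
            intro: has_vector_derivative_at_within simp: power2_eq_square)
    then show ?thesis unfolding N_def by (simp add: integral_unique)
  qed
  have "N (Suc n) = 2 / (2 * real (Suc n) + 1)" for n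
  proof (induction n)
    case 0 then show ?case using N1 by simp
  next
    case (Suc n)
    then show ?case unfolding step by (simp add: field_simps)
  qed
  then have "N n = 2 / (2 * real n + 1)" using N0 by (cases n) auto
  then show ?thesis unfolding N_def .
qed

lemma amgm_t:
  fixes x y t :: real
  assumes "t > 0"
  shows "x * y \<le> (t * x^2 + y^2 / t) / 2"
proof -
  have "0 \<le> (t * x - y)^2" by simp
  then have "t * (2 * (x * y)) \<le> t * (t * x^2) + y^2" by (simp add: power2_eq_square algebra_simps)
  also have "t * (t * x^2) + y^2 = t * (t * x^2 + y^2 / t)" using assms by (simp add: field_simps)
  finally have "2 * (x * y) \<le> t * x^2 + y^2 / t" using assms by (simp only: mult_le_cancel_left_pos)
  then show ?thesis by simp
qed

lemma norm_add_sq: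
  fixes a b :: complex
  shows "(norm (a + b))^2 = (norm a)^2 + (norm b)^2 + 2 * Re (a * cnj b)"
  unfolding cmod_power2 by (simp add: power2_eq_square algebra_simps)

lemma norm_sq_Re: "(norm (z::complex))^2 = Re (z * cnj z)"
  unfolding cmod_power2 by (simp add: power2_eq_square)

lemma integral_Re:
  assumes "F integrable_on S"
  shows "integral S (\<lambda>x. Re (F x)) = Re (integral S F)"
  using integral_linear[OF assms bounded_linear_Re] by (simp add: o_def)

lemma ipQ_sum:
  fixes Q :: "nat \<Rightarrow> real \<Rightarrow> real" and e :: "nat \<Rightarrow> complex"
  assumes Qc: "\<And>j. j \<le> J \<Longrightarrow> continuous_on {a..b} (Q j)"
    and orth: "\<And>j k. j \<le> J \<Longrightarrow> k \<le> J \<Longrightarrow>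
       integral {a..b} (\<lambda>x. Q j x * Q k x) = (if j = k then 1 else 0)"
    and k: "k \<le> J"
  shows "integral {a..b} (\<lambda>x. (\<Sum>j\<le>J. e j * complex_of_real (Q j x)) * complex_of_real (Q k x)) = e k"
proof -
  have "integral {a..b} (\<lambda>x. (\<Sum>j\<le>J. e j * complex_of_real (Q j x)) * complex_of_real (Q k x))
      = integral {a..b} (\<lambda>x. \<Sum>j\<le>J. e j * complex_of_real (Q j x * Q k x))"
    by (simp only: sum_distrib_right mult.assoc of_real_mult)
  also have "\<dots> = (\<Sum>j\<le>J. integral {a..b} (\<lambda>x. e j * complex_of_real (Q j x * Q k x)))"
    by (rule integral_sum) (auto intro!: integrable_continuous_interval continuous_intros Qc k)
  also have "\<dots> = (\<Sum>j\<le>J. e j * complex_of_real (integral {a..b} (\<lambda>x. Q j x * Q k x)))"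
  proof (rule sum.cong[OF refl])
    fix j assume j: "j \<in> {..J}"
    have "((\<lambda>x. Q j x * Q k x) has_integral integral {a..b} (\<lambda>x. Q j x * Q k x)) {a..b}"
      using j k by (auto intro!: integrable_integral integrable_continuous_interval continuous_intros Qc)
    from has_integral_of_real[OF this, where 'b=complex]
    have "integral {a..b} (\<lambda>x. complex_of_real (Q j x * Q k x)) = complex_of_real (integral {a..b} (\<lambda>x. Q j x * Q k x))"
      by (rule integral_unique)
    then show "integral {a..b} (\<lambda>x. e j * complex_of_real (Q j x * Q k x)) = e j * complex_of_real (integral {a..b} (\<lambda>x. Q j x * Q k x))"
      by simp
  qed
  also have "\<dots> = (\<Sum>j\<le>J. if j = k then e j else 0)"
    by (rule sum.cong[OF refl]) (auto simp: orth k)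
  also have "\<dots> = e k" using k by simp
  finally show ?thesis .
qed

lemma ip_sum_g:
  fixes Q :: "nat \<Rightarrow> real \<Rightarrow> real" and e :: "nat \<Rightarrow> complex"
  assumes Qc: "\<And>j. j \<le> J \<Longrightarrow> continuous_on {a..b} (Q j)"
    and gc: "continuous_on {a..b} g"
  shows "integral {a..b} (\<lambda>x. (\<Sum>j\<le>J. e j * complex_of_real (Q j x)) * cnj (g x))
       = (\<Sum>j\<le>J. e j * cnj (integral {a..b} (\<lambda>x. g x * complex_of_real (Q j x))))"
proof -
  have "integral {a..b} (\<lambda>x. (\<Sum>j\<le>J. e j * complex_of_real (Q j x)) * cnj (g x))
     = integral {a..b} (\<lambda>x. \<Sum>j\<le>J. e j * cnj (g x * complex_of_real (Q j x)))"
    by (simp add: sum_distrib_left sum_distrib_right mult_ac)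
  also have "\<dots> = (\<Sum>j\<le>J. integral {a..b} (\<lambda>x. e j * cnj (g x * complex_of_real (Q j x))))"
    by (rule integral_sum) (auto intro!: integrable_continuous_interval continuous_intros Qc gc)
  also have "\<dots> = (\<Sum>j\<le>J. e j * cnj (integral {a..b} (\<lambda>x. g x * complex_of_real (Q j x))))"
    by (simp add: integral_cnj)
  finally show ?thesis .
qed

lemma proj_bound:
  fixes Q :: "nat \<Rightarrow> real \<Rightarrow> real" and d :: "nat \<Rightarrow> complex" and f g :: "real \<Rightarrow> complex"
  assumes Qc: "\<And>j. j \<le> J \<Longrightarrow> continuous_on {a..b} (Q j)"
    and orth: "\<And>j k. j \<le> J \<Longrightarrow> k \<le> J \<Longrightarrow>
       integral {a..b} (\<lambda>x. Q j x * Q k x) = (if j = k then 1 else 0)"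
    and fc: "continuous_on {a..b} f" and gc: "continuous_on {a..b} g"
    and t: "t > 0"
  shows "norm ((\<Sum>j\<le>J. integral {a..b} (\<lambda>x. f x * complex_of_real (Q j x))
                  * cnj (integral {a..b} (\<lambda>x. g x * complex_of_real (Q j x))))
               - integral {a..b} (\<lambda>x. f x * cnj (g x)))
     \<le> (t * integral {a..b} (\<lambda>x. (norm (f x - (\<Sum>j\<le>J. d j * complex_of_real (Q j x))))^2)
         + integral {a..b} (\<lambda>x. (norm (g x))^2) / t) / 2"
proof -
  define S where "S = {a..b}"
  define QC where "QC j x = complex_of_real (Q j x)" for j x
  define ip where "ip u w = integral S (\<lambda>x. u x * cnj (w x))" for u w :: "real \<Rightarrow> complex"
  define q where "q x = (\<Sum>j\<le>J. d j * QC j x)" for x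
  define h where "h x = f x - q x" for x
  define c where "c j = ip h (QC j)" for j
  define ph where "ph x = (\<Sum>j\<le>J. c j * QC j x)" for x
  define u where "u x = h x - ph x" for x
  have cQC: "continuous_on S (QC j)" if "j \<le> J" for j
    unfolding QC_def S_def using that by (auto intro!: continuous_intros Qc)
  have cq: "continuous_on S q" unfolding q_def by (auto intro!: continuous_intros cQC)
  have cph: "continuous_on S ph" unfolding ph_def by (auto intro!: continuous_intros cQC)
  have cf: "continuous_on S f" and cg: "continuous_on S g" using fc gc S_def by auto
  have ch: "continuous_on S h" unfolding h_def by (auto intro!: continuous_intros cq cf)
  have cu: "continuous_on S u" unfolding u_def by (auto intro!: continuous_intros cph ch)
  have intg: "F integrable_on S" if "continuous_on S F" for F :: "real \<Rightarrow> complex"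
    using that S_def integrable_continuous_interval by blast
  have intgr: "F integrable_on S" if "continuous_on S F" for F :: "real \<Rightarrow> real"
    using that S_def integrable_continuous_interval by blast
  have ipQ: "ip F (QC j) = integral S (\<lambda>x. F x * complex_of_real (Q j x))" for F j
    unfolding ip_def QC_def by simp
  have ip_add: "ip (\<lambda>x. F x + G x) W = ip F W + ip G W"
    if "continuous_on S F" "continuous_on S G" "continuous_on S W" for F G W
    unfolding ip_def distrib_right
    by (rule integral_add) (auto intro!: intg continuous_intros that)
  have ip_diff: "ip (\<lambda>x. F x - G x) W = ip F W - ip G W"
    if "continuous_on S F" "continuous_on S G" "continuous_on S W" for F G W
    unfolding ip_def left_diff_distrib
    by (rule integral_diff) (auto intro!: intg continuous_intros that)
  have F1: "ip q (QC k) = d k" if "k \<le> J" for k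
    unfolding ipQ q_def QC_def S_def using ipQ_sum[OF Qc orth that] by simp
  have F2: "ip ph (QC k) = c k" if "k \<le> J" for k
    unfolding ipQ ph_def QC_def S_def using ipQ_sum[OF Qc orth that] by simp
  have L2: "ip (\<lambda>x. \<Sum>j\<le>J. e j * QC j x) W = (\<Sum>j\<le>J. e j * cnj (ip W (QC j)))"
    if "continuous_on S W" for e W
    unfolding ipQ unfolding ip_def QC_def S_def
    by (rule ip_sum_g[OF Qc]) (use that S_def in auto)
  have fhq: "f = (\<lambda>x. h x + q x)" unfolding h_def by simp
  have F3: "ip f (QC k) = c k + d k" if "k \<le> J" for k
    using ip_add[OF ch cq cQC[OF that]] F1[OF that] fhq c_def by simp
  have F6: "ip f g = ip h g + ip q g"
    using ip_add[OF ch cq cg] fhq by simp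
  have key: "(\<Sum>j\<le>J. ip f (QC j) * cnj (ip g (QC j))) - ip f g = - ip u g"
  proof -
    have "(\<Sum>j\<le>J. ip f (QC j) * cnj (ip g (QC j)))
        = (\<Sum>j\<le>J. c j * cnj (ip g (QC j))) + (\<Sum>j\<le>J. d j * cnj (ip g (QC j)))"
      by (simp add: F3 distrib_right sum.distrib)
    also have "(\<Sum>j\<le>J. c j * cnj (ip g (QC j))) = ip ph g"
      unfolding ph_def by (rule L2[symmetric, OF cg])
    also have "(\<Sum>j\<le>J. d j * cnj (ip g (QC j))) = ip q g"
      unfolding q_def by (rule L2[symmetric, OF cg])
    finally show ?thesis
      using F6 ip_diff[OF ch cph cg] unfolding u_def[abs_def] by simp
  qed
  have uQ: "ip u (QC k) = 0" if "k \<le> J" for k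
    unfolding u_def using ip_diff[OF ch cph cQC[OF that]] F2[OF that] c_def by simp
  have uph: "ip u ph = 0"
  proof -
    have "ip ph u = 0" unfolding ph_def using L2[OF cu, of c] uQ by simp
    moreover have "ip u ph = cnj (ip ph u)"
      unfolding ip_def by (simp add: integral_cnj mult.commute)
    ultimately show ?thesis by simp
  qed
  have nu: "integral S (\<lambda>x. (norm (u x))^2) \<le> integral S (\<lambda>x. (norm (h x))^2)"
  proof -
    have hu: "h x = u x + ph x" for x unfolding u_def by simp
    have "integral S (\<lambda>x. (norm (h x))^2)
        = integral S (\<lambda>x. (norm (u x))^2 + (norm (ph x))^2 + 2 * Re (u x * cnj (ph x)))"
      unfolding hu norm_add_sq by simp
    also have "\<dots> = integral S (\<lambda>x. (norm (u x))^2) + integral S (\<lambda>x. (norm (ph x))^2)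
        + integral S (\<lambda>x. 2 * Re (u x * cnj (ph x)))"
      by (subst integral_add, (auto intro!: intgr continuous_intros cu cph)[2])
         (subst integral_add, (auto intro!: intgr continuous_intros cu cph)[2], simp)
    also have "integral S (\<lambda>x. 2 * Re (u x * cnj (ph x))) = 2 * Re (ip u ph)"
      unfolding ip_def
      by (subst integral_mult_right, subst integral_Re) (auto intro!: intg continuous_intros cu cph)
    also have "integral S (\<lambda>x. (norm (ph x))^2) \<ge> 0"
      by (rule integral_nonneg) (auto intro!: intgr continuous_intros cph)
    ultimately show ?thesis using uph by simp
  qed
  have "norm (ip u g) \<le> integral S (\<lambda>x. (t * (norm (u x))^2 + (norm (g x))^2 / t) / 2)"
    unfolding ip_def
  proof (rule integral_norm_bound_integral)
    show "(\<lambda>x. u x * cnj (g x)) integrable_on S" by (auto intro!: intg continuous_intros cu cg)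
    show "(\<lambda>x. (t * (norm (u x))^2 + (norm (g x))^2 / t) / 2) integrable_on S"
      using t by (auto intro!: intgr continuous_intros cu cg)
    show "norm (u x * cnj (g x)) \<le> (t * (norm (u x))^2 + (norm (g x))^2 / t) / 2" for x
      using amgm_t[OF t] by (simp add: norm_mult)
  qed
  also have "\<dots> = (t * integral S (\<lambda>x. (norm (u x))^2) + integral S (\<lambda>x. (norm (g x))^2) / t) / 2"
    using t by (simp add: integral_add intgr continuous_intros cu cg)
  also have "\<dots> \<le> (t * integral S (\<lambda>x. (norm (h x))^2) + integral S (\<lambda>x. (norm (g x))^2) / t) / 2"
    using nu t by (simp add: divide_right_mono)
  finally have "norm (ip u g) \<le> (t * integral S (\<lambda>x. (norm (h x))^2) + integral S (\<lambda>x. (norm (g x))^2) / t) / 2" .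
  moreover have "(\<Sum>j\<le>J. integral {a..b} (\<lambda>x. f x * complex_of_real (Q j x))
                  * cnj (integral {a..b} (\<lambda>x. g x * complex_of_real (Q j x))))
               - integral {a..b} (\<lambda>x. f x * cnj (g x)) = - ip u g"
    using key unfolding ipQ by (simp add: ip_def S_def)
  ultimately show ?thesis by (simp add: h_def q_def QC_def S_def)
qed

lemma int_poly_bound:
  fixes a b B :: real
  assumes "a \<le> b"
  shows "((\<lambda>x. B * ((b - x)^p / fact p)) has_integral B * (b - a)^(Suc p) / fact (Suc p)) {a..b}"
proof -
  have "((\<lambda>x. B * ((b - x)^p / fact p)) has_integral
      ((- B * (b - b)^(Suc p) / fact (Suc p)) - (- B * (b - a)^(Suc p) / fact (Suc p)))) {a..b}"
  proof (rule fundamental_theorem_of_calculus[OF assms])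
    fix x assume "x \<in> {a..b}"
    have "((\<lambda>x. - B * (b - x)^(Suc p) / fact (Suc p)) has_real_derivative
        (- B * (real (Suc p) * (b - x)^p * (0 - 1)) / fact (Suc p))) (at x)"
      by (auto intro!: derivative_eq_intros simp del: fact_Suc power_Suc)
    moreover have "(- B * (real (Suc p) * (b - x)^p * (0 - 1)) / fact (Suc p)) = B * ((b - x)^p / fact p)"
    proof -
      have fp: "fact p > (0::real)" by simp
      then have "fact p + fact p * real p \<noteq> (0::real)"
        by (metis add_pos_nonneg fp mult_nonneg_nonneg of_nat_0_le_iff less_le_not_le order.strict_iff_not)
      then show ?thesis by (simp add: fact_Suc field_simps)
    qed
    ultimately show "((\<lambda>x. - B * (b - x)^(Suc p) / fact (Suc p)) has_vector_derivative B * ((b - x)^p / fact p)) (at x within {a..b})"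
      by (auto simp: has_real_derivative_iff_has_vector_derivative[symmetric] intro: has_field_derivative_at_within)
  qed
  then show ?thesis by simp
qed

lemma taylor_bound_le:
  fixes Df :: "nat \<Rightarrow> real \<Rightarrow> complex"
  assumes D: "\<And>m t. m \<le> p \<Longrightarrow> (Df m has_vector_derivative Df (Suc m) t) (at t)"
    and B: "\<And>t. norm (Df (Suc p) t) \<le> B"
    and ab: "a \<le> b"
  shows "norm (Df 0 b - (\<Sum>i\<le>p. ((b - a)^i / fact i) *\<^sub>R Df i a)) \<le> B * (b - a)^(Suc p) / fact (Suc p)"
proof -
  define i where "i x = ((b - x) ^ (Suc p - 1) / fact (Suc p - 1)) *\<^sub>R Df (Suc p) x" for x
  have D': "\<And>m t. m < Suc p \<Longrightarrow> a \<le> t \<Longrightarrow> t \<le> b \<Longrightarrow>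
    (Df m has_vector_derivative Df (Suc m) t) (at t within {a..b})"
    using D by (auto intro: has_vector_derivative_at_within)
  have T: "(i has_integral Df 0 b - (\<Sum>i<Suc p. ((b-a) ^ i / fact i) *\<^sub>R Df i a)) {a..b}"
    unfolding i_def by (rule Taylor_has_integral[of "Suc p" Df "Df 0" a b]) (use D' ab in auto)
  have "norm (Df 0 b - (\<Sum>i\<le>p. ((b - a)^i / fact i) *\<^sub>R Df i a)) = norm (integral {a..b} i)"
    using T by (simp add: integral_unique lessThan_Suc_atMost)
  also have "\<dots> \<le> integral {a..b} (\<lambda>x. B * ((b - x)^p / fact p))"
  proof (rule integral_norm_bound_integral)
    show "i integrable_on {a..b}" using T by blast
    show "(\<lambda>x. B * ((b - x)^p / fact p)) integrable_on {a..b}" using int_poly_bound[OF ab] by blast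
    fix x assume "x \<in> {a..b}"
    then have "0 \<le> (b - x)^p / fact p" by simp
    then have "norm (Df (Suc p) x) * ((b - x)^p / fact p) \<le> B * ((b - x)^p / fact p)"
      using B[of x] by (rule mult_right_mono[rotated])
    moreover have "norm (i x) = norm (Df (Suc p) x) * ((b - x)^p / fact p)"
      unfolding i_def using \<open>x \<in> {a..b}\<close> by (simp add: abs_mult)
    ultimately show "norm (i x) \<le> B * ((b - x)^p / fact p)" by simp
  qed
  also have "\<dots> = B * (b - a)^(Suc p) / fact (Suc p)"
    using int_poly_bound[OF ab] by (rule integral_unique)
  finally show ?thesis .
qed

lemma taylor_bound:
  fixes Df :: "nat \<Rightarrow> real \<Rightarrow> complex"
  assumes D: "\<And>m t. m \<le> p \<Longrightarrow> (Df m has_vector_derivative Df (Suc m) t) (at t)"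
    and B: "\<And>t. norm (Df (Suc p) t) \<le> B"
  shows "norm (Df 0 b - (\<Sum>i\<le>p. ((b - a)^i / fact i) *\<^sub>R Df i a)) \<le> B * \<bar>b - a\<bar>^(Suc p) / fact (Suc p)"
proof (cases "a \<le> b")
  case True
  then show ?thesis using taylor_bound_le[OF D B True] by simp
next
  case False
  define DF where "DF m x = ((-1)^m :: real) *\<^sub>R Df m (-x)" for m x
  have D2: "(DF m has_vector_derivative DF (Suc m) t) (at t)" if "m \<le> p" for m t
  proof -
    have h1: "((\<lambda>x. Df m (-x)) has_vector_derivative (-1) *\<^sub>R Df (Suc m) (-t)) (at t)"
    proof -
      have u: "(uminus has_vector_derivative -1) (at t)"
        using has_vector_derivative_minus[OF has_vector_derivative_id[of "at t"]] by (simp add: fun_eq_iff)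
      show ?thesis
        using vector_diff_chain_at[OF u, of "Df m" "Df (Suc m) (-t)"] D[OF that, of "-t"]
        by (simp add: o_def)
    qed
    have "((\<lambda>x. ((-1)^m :: real) *\<^sub>R Df m (-x)) has_vector_derivative ((-1)^m :: real) *\<^sub>R ((-1) *\<^sub>R Df (Suc m) (-t))) (at t)"
      using has_vector_derivative_scaleR[OF DERIV_const[of "(-1)^m::real" "at t"] h1] by simp
    then show ?thesis unfolding DF_def by simp
  qed
  have B2: "norm (DF (Suc p) t) \<le> B" for t unfolding DF_def using B[of "-t"] by (simp add: norm_power)
  have "-a \<le> -b" using False by simp
  from taylor_bound_le[OF D2 B2 this]
  have "norm (DF 0 (-b) - (\<Sum>i\<le>p. ((-b - -a)^i / fact i) *\<^sub>R DF i (-a))) \<le> B * (-b - -a)^(Suc p) / fact (Suc p)" .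
  moreover have "(\<Sum>i\<le>p. ((-b - -a)^i / fact i) *\<^sub>R DF i (-a)) = (\<Sum>i\<le>p. ((b - a)^i / fact i) *\<^sub>R Df i a)"
  proof (rule sum.cong[OF refl])
    fix i
    have "(-b - -a)^i * (-1)^i = ((b - a))^i"
      by (simp add: power_mult_distrib[symmetric])
    then show "((-b - -a)^i / fact i) *\<^sub>R DF i (-a) = ((b - a)^i / fact i) *\<^sub>R Df i a"
      unfolding DF_def by (simp add: scaleR_scaleR)
  qed
  moreover have "\<bar>b - a\<bar> = -b - -a" using False by simp
  ultimately show ?thesis unfolding DF_def by simp
qed

lemma subst_interval:
  fixes F :: "real \<Rightarrow> real" and \<eta> :: real and n :: int
  assumes eta: "\<eta> > 0" and Fc: "continuous_on {-1..1} F"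
  shows "integral {of_int n * \<eta> .. (of_int n + 1) * \<eta>} (\<lambda>\<tau>. F (2 * ((\<tau> - of_int n * \<eta>) / \<eta>) - 1))
       = \<eta> / 2 * integral {-1..1} F"
proof -
  have hi: "(F has_integral integral {-1..1} F) (cbox (-1) 1)"
    using integrable_continuous_interval[OF Fc] by (simp add: integrable_integral)
  have m: "2 / \<eta> > 0" using eta by simp
  from has_integral_affinity'[OF hi m, of "- 2 * of_int n - 1"]
  have "((\<lambda>x. F ((2 / \<eta>) *\<^sub>R x + (- 2 * of_int n - 1))) has_integral integral {-1..1} F /\<^sub>R (2 / \<eta>) ^ DIM(real))
     (cbox ((-1 - (- 2 * of_int n - 1)) /\<^sub>R (2 / \<eta>)) ((1 - (- 2 * of_int n - 1)) /\<^sub>R (2 / \<eta>)))" .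
  moreover have "cbox ((-1 - (- 2 * of_int n - 1)) /\<^sub>R (2 / \<eta>)) ((1 - (- 2 * of_int n - 1)) /\<^sub>R (2 / \<eta>))
     = {of_int n * \<eta> .. (of_int n + 1) * \<eta>}"
    using eta by (simp add: field_simps)
  moreover have "(\<lambda>x. F ((2 / \<eta>) *\<^sub>R x + (- 2 * of_int n - 1))) = (\<lambda>\<tau>. F (2 * ((\<tau> - of_int n * \<eta>) / \<eta>) - 1))"
    using eta by (simp add: fun_eq_iff field_simps)
  moreover have "integral {-1..1} F /\<^sub>R (2 / \<eta>) ^ DIM(real) = \<eta> / 2 * integral {-1..1} F"
    by simp
  ultimately show ?thesis by (metis integral_unique)
qed

definition inspan :: "nat \<Rightarrow> (real \<Rightarrow> complex) \<Rightarrow> bool" where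
  "inspan J q \<longleftrightarrow> (\<exists>d. \<forall>x. q x = (\<Sum>j\<le>J. d j * complex_of_real (legendre j x)))"

lemma inspan_zero: "inspan J (\<lambda>x. 0)"
  unfolding inspan_def by (rule exI[of _ "\<lambda>_. 0"]) simp

lemma inspan_add: "inspan J p \<Longrightarrow> inspan J q \<Longrightarrow> inspan J (\<lambda>x. p x + q x)"
  unfolding inspan_def
proof (elim exE)
  fix dp dq assume p: "\<forall>x. p x = (\<Sum>j\<le>J. dp j * complex_of_real (legendre j x))"
    and q: "\<forall>x. q x = (\<Sum>j\<le>J. dq j * complex_of_real (legendre j x))"
  show "\<exists>d. \<forall>x. p x + q x = (\<Sum>j\<le>J. d j * complex_of_real (legendre j x))"
    by (rule exI[of _ "\<lambda>j. dp j + dq j"]) (simp add: p q distrib_right sum.distrib)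
qed

lemma inspan_cmul: "inspan J p \<Longrightarrow> inspan J (\<lambda>x. c * p x)"
  unfolding inspan_def
proof (elim exE)
  fix dp assume p: "\<forall>x. p x = (\<Sum>j\<le>J. dp j * complex_of_real (legendre j x))"
  show "\<exists>d. \<forall>x. c * p x = (\<Sum>j\<le>J. d j * complex_of_real (legendre j x))"
    by (rule exI[of _ "\<lambda>j. c * dp j"]) (simp add: p sum_distrib_left mult.assoc)
qed

lemma inspan_mono: "J \<le> K \<Longrightarrow> inspan J p \<Longrightarrow> inspan K p"
  unfolding inspan_def
proof (elim exE)
  fix dp assume JK: "J \<le> K" and p: "\<forall>x. p x = (\<Sum>j\<le>J. dp j * complex_of_real (legendre j x))"
  show "\<exists>d. \<forall>x. p x = (\<Sum>j\<le>K. d j * complex_of_real (legendre j x))"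
  proof (rule exI[of _ "\<lambda>j. if j \<in> {..J} then dp j else 0"], intro allI)
    fix x
    have "(\<Sum>j\<le>K. (if j \<in> {..J} then dp j else 0) * complex_of_real (legendre j x))
        = (\<Sum>j\<le>J. (if j \<in> {..J} then dp j else 0) * complex_of_real (legendre j x))"
      by (rule sum.mono_neutral_right) (use JK in auto)
    also have "\<dots> = (\<Sum>j\<le>J. dp j * complex_of_real (legendre j x))" by simp
    finally show "p x = (\<Sum>j\<le>K. (if j \<in> {..J} then dp j else 0) * complex_of_real (legendre j x))"
      using p by simp
  qed
qed

lemma inspan_single: "i \<le> K \<Longrightarrow> inspan K (\<lambda>x. c * complex_of_real (legendre i x))"
  unfolding inspan_def
proof (rule exI[of _ "\<lambda>j. if j = i then c else 0"], intro allI)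
  fix x assume iK: "i \<le> K"
  have "(\<Sum>j\<le>K. (if j = i then c else 0) * complex_of_real (legendre j x))
      = (\<Sum>j\<le>K. if j = i then c * complex_of_real (legendre i x) else 0)"
    by (rule sum.cong) auto
  also have "\<dots> = c * complex_of_real (legendre i x)" using iK by simp
  finally show "c * complex_of_real (legendre i x) = (\<Sum>j\<le>K. (if j = i then c else 0) * complex_of_real (legendre j x))"
    by simp
qed

lemma inspan_sum: "finite A \<Longrightarrow> (\<And>i. i \<in> A \<Longrightarrow> inspan K (f i)) \<Longrightarrow> inspan K (\<lambda>x. \<Sum>i\<in>A. f i x)"
proof (induction A rule: finite_induct)
  case empty then show ?case by (simp add: inspan_zero)
next
  case (insert a A)
  then show ?case by (simp add: inspan_add)
qed

lemma inspan_xL: "inspan (Suc i) (\<lambda>x. complex_of_real x * complex_of_real (legendre i x))"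
proof (cases i)
  case 0
  then show ?thesis using inspan_single[of 1 "Suc 0" 1] by simp
next
  case (Suc m)
  have eq: "complex_of_real x * complex_of_real (legendre (Suc m) x)
     = complex_of_real ((real m + 2) / (2 * real m + 3)) * complex_of_real (legendre (Suc (Suc m)) x)
       + complex_of_real ((real m + 1) / (2 * real m + 3)) * complex_of_real (legendre m x)" for x
  proof -
    have "(real m + 2) * legendre (Suc (Suc m)) x + (real m + 1) * legendre m x = (2 * real m + 3) * (x * legendre (Suc m) x)"
      using legendre_rec[of m x] by (simp del: legendre.simps add: algebra_simps)
    then have "x * legendre (Suc m) x = (real m + 2) / (2 * real m + 3) * legendre (Suc (Suc m)) x
       + (real m + 1) / (2 * real m + 3) * legendre m x"
    proof -
      have aux: "\<And>c P A R B y::real. c \<noteq> 0 \<Longrightarrow> P * A + R * B = c * y \<Longrightarrow> y = P / c * A + R / c * B"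
        by (simp add: field_simps)
      have "2 * real m + 3 \<noteq> 0" by simp
      from aux[OF this \<open>(real m + 2) * legendre (Suc (Suc m)) x + (real m + 1) * legendre m x = (2 * real m + 3) * (x * legendre (Suc m) x)\<close>]
      show ?thesis .
    qed
    then have "complex_of_real (x * legendre (Suc m) x) = complex_of_real ((real m + 2) / (2 * real m + 3) * legendre (Suc (Suc m)) x
       + (real m + 1) / (2 * real m + 3) * legendre m x)" by (rule arg_cong)
    then show ?thesis by (simp only: of_real_mult of_real_add)
  qed
  show ?thesis unfolding Suc eq
    by (intro inspan_add inspan_single) auto
qed

lemma inspan_x: "inspan J q \<Longrightarrow> inspan (Suc J) (\<lambda>x. complex_of_real x * q x)"
proof -
  assume "inspan J q"
  then obtain d where q: "\<And>x. q x = (\<Sum>j\<le>J. d j * complex_of_real (legendre j x))"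
    unfolding inspan_def by blast
  have "inspan (Suc J) (\<lambda>x. \<Sum>j\<le>J. d j * (complex_of_real x * complex_of_real (legendre j x)))"
  proof (rule inspan_sum)
    fix j assume "j \<in> {..J}"
    then show "inspan (Suc J) (\<lambda>x. d j * (complex_of_real x * complex_of_real (legendre j x)))"
      by (intro inspan_cmul inspan_mono[OF _ inspan_xL]) auto
  qed simp
  then show ?thesis by (simp add: q sum_distrib_left mult_ac)
qed

lemma inspan_pow: "inspan k (\<lambda>x. complex_of_real ((\<alpha> * x + \<beta>)^k))"
proof (induction k)
  case 0
  then show ?case using inspan_single[of 0 0 1] by simp
next
  case (Suc k)
  have eq: "(\<lambda>x. complex_of_real ((\<alpha> * x + \<beta>)^Suc k)) =
     (\<lambda>x. complex_of_real \<alpha> * (complex_of_real x * complex_of_real ((\<alpha> * x + \<beta>)^k))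
        + complex_of_real \<beta> * complex_of_real ((\<alpha> * x + \<beta>)^k))"
    by (simp add: fun_eq_iff algebra_simps)
  show ?case unfolding eq
    by (intro inspan_add inspan_cmul inspan_x Suc inspan_mono[OF _ Suc]) auto
qed

lemma inspan_taylor: "inspan J (\<lambda>x. \<Sum>i\<le>J. ((\<alpha> * x + \<beta>)^i / fact i) *\<^sub>R w i)"
proof (rule inspan_sum)
  fix i assume i: "i \<in> {..J}"
  have eq: "(\<lambda>x. ((\<alpha> * x + \<beta>)^i / fact i) *\<^sub>R w i) = (\<lambda>x. (w i / of_real (fact i)) * complex_of_real ((\<alpha> * x + \<beta>)^i))"
    by (simp add: fun_eq_iff scaleR_conv_of_real)
  show "inspan J (\<lambda>x. ((\<alpha> * x + \<beta>)^i / fact i) *\<^sub>R w i)"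
    unfolding eq using i by (intro inspan_cmul inspan_mono[OF _ inspan_pow]) auto
qed simp


definition Qb :: "real \<Rightarrow> int \<Rightarrow> nat \<Rightarrow> real \<Rightarrow> real" where
  "Qb \<eta> n j \<tau> = sqrt ((2 * real j + 1) / \<eta>) * legendre j (2 * ((\<tau> - of_int n * \<eta>) / \<eta>) - 1)"

lemma legendre_comp_cont[continuous_intros]:
  "continuous_on S g \<Longrightarrow> continuous_on S (\<lambda>x. legendre j (g x))"
  using continuous_on_compose2[OF legendre_cont[of UNIV j]] by blast

lemma Qb_cont: "\<eta> > 0 \<Longrightarrow> continuous_on S (Qb \<eta> n j)"
  unfolding Qb_def by (intro continuous_intros) auto

lemma Qb_orth:
  assumes eta: "\<eta> > 0"
  shows "integral {of_int n * \<eta> .. (of_int n + 1) * \<eta>} (\<lambda>\<tau>. Qb \<eta> n j \<tau> * Qb \<eta> n k \<tau>) = (if j = k then 1 else 0)"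
proof -
  define sj where "sj = sqrt ((2 * real j + 1) / \<eta>)"
  define sk where "sk = sqrt ((2 * real k + 1) / \<eta>)"
  define F where "F y = sj * sk * (legendre j y * legendre k y)" for y
  have "integral {of_int n * \<eta> .. (of_int n + 1) * \<eta>} (\<lambda>\<tau>. Qb \<eta> n j \<tau> * Qb \<eta> n k \<tau>)
      = integral {of_int n * \<eta> .. (of_int n + 1) * \<eta>} (\<lambda>\<tau>. F (2 * ((\<tau> - of_int n * \<eta>) / \<eta>) - 1))"
    unfolding Qb_def F_def sj_def sk_def by (simp add: algebra_simps)
  also have "\<dots> = \<eta> / 2 * integral {-1..1} F"
    by (rule subst_interval[OF eta]) (auto simp: F_def intro!: continuous_intros legendre_cont)
  also have "integral {-1..1} F = sj * sk * integral {-1..1} (\<lambda>y. legendre j y * legendre k y)"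
    unfolding F_def by simp
  finally have *: "integral {of_int n * \<eta> .. (of_int n + 1) * \<eta>} (\<lambda>\<tau>. Qb \<eta> n j \<tau> * Qb \<eta> n k \<tau>)
     = \<eta> / 2 * (sj * sk * integral {-1..1} (\<lambda>y. legendre j y * legendre k y))" .
  show ?thesis
  proof (cases "j = k")
    case True
    have "sj * sk = (2 * real j + 1) / \<eta>" unfolding sj_def sk_def True using eta
      by (simp add: real_sqrt_mult[symmetric])
    then show ?thesis using * True eta leg_norm[of k] by (simp add: field_simps)
  next
    case False
    then show ?thesis using * leg_orth[OF False] by simp
  qed
qed

lemma Ccoef_Qb:
  assumes eta: "\<eta> > 0"
  shows "Ccoef v \<eta> n j t = integral {of_int n * \<eta> .. (of_int n + 1) * \<eta>} (\<lambda>\<tau>. v (t - \<tau>) * complex_of_real (Qb \<eta> n j \<tau>))"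
  unfolding Ccoef_def
proof (rule integral_spike[of "{(of_int n + 1) * \<eta>}"])
  fix x assume "x \<in> {of_int n * \<eta> .. (of_int n + 1) * \<eta>} - {(of_int n + 1) * \<eta>}"
  then have "of_int n * \<eta> \<le> x \<and> x < (of_int n + 1) * \<eta>" by auto
  then show "v (t - x) * complex_of_real (Qb \<eta> n j x) = v (t - x) * complex_of_real (Pbasis \<eta> n j x)"
    unfolding Pbasis_def Qb_def by simp
qed simp

lemma nderiv_0[simp]: "nderiv 0 f = f" unfolding nderiv_def by simp

lemma nderiv_Suc: "nderiv (Suc k) f t = vector_derivative (nderiv k f) (at t)"
  unfolding nderiv_def by simp

lemma smooth_deriv:
  assumes "smooth_fun v"
  shows "(nderiv k v has_vector_derivative nderiv (Suc k) v t) (at t)"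
  using assms unfolding smooth_fun_def nderiv_Suc by (simp add: vector_derivative_works[symmetric])

lemma smooth_isCont:
  assumes "smooth_fun v"
  shows "isCont (nderiv k v) t"
  using assms unfolding smooth_fun_def by (simp add: differentiable_imp_continuous_within)

lemma smooth_cont:
  assumes "smooth_fun v"
  shows "continuous_on S (nderiv k v)"
  using smooth_isCont[OF assms] by (simp add: continuous_at_imp_continuous_on)

lemma smooth_cont0:
  assumes "smooth_fun v"
  shows "continuous_on S v"
  using smooth_cont[OF assms, of S 0] by simp

lemma nderiv_zero_out:
  assumes sm: "smooth_fun v" and r: "0 \<le> r" and supp: "\<And>t. \<bar>t\<bar> > r \<Longrightarrow> v t = 0"
    and t: "\<bar>t\<bar> \<ge> r"
  shows "nderiv k v t = 0"
proof -
  have A: "nderiv k v t = 0" if "\<bar>t\<bar> > r" for k t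
    using that
  proof (induction k arbitrary: t)
    case 0 then show ?case using supp by simp
  next
    case (Suc k)
    have op: "open {y::real. r < \<bar>y\<bar>}"
      by (rule open_Collect_less) (auto intro!: continuous_intros)
    have "(nderiv k v has_vector_derivative 0) (at t)"
      by (rule has_vector_derivative_transform_within_open[of "\<lambda>_. 0" 0 t "{y. r < \<bar>y\<bar>}"])
         (use op Suc in auto)
    then show ?case unfolding nderiv_Suc by (rule vector_derivative_at)
  qed
  show ?thesis
  proof (cases "\<bar>t\<bar> > r")
    case True then show ?thesis using A by blast
  next
    case False
    then have teq: "\<bar>t\<bar> = r" using t by simp
    let ?f = "nderiv k v"
    show ?thesis
    proof (cases "t \<ge> 0")
      case True
      then have tr: "t = r" using teq by simp
      have "(?f \<longlongrightarrow> ?f t) (at_right t)"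
        using smooth_isCont[OF sm] by (simp add: isCont_def filterlim_at_split)
      moreover have "(?f \<longlongrightarrow> 0) (at_right t)"
      proof (rule Lim_transform_eventually[OF tendsto_const])
        show "\<forall>\<^sub>F x in at_right t. 0 = ?f x"
          using eventually_at_right_less[of t] by eventually_elim (use A tr r in auto)
      qed
      ultimately show ?thesis using tendsto_unique[OF trivial_limit_at_right_real] by blast
    next
      case False
      then have tr: "t = - r" using teq by simp
      have "(?f \<longlongrightarrow> ?f t) (at_left t)"
        using smooth_isCont[OF sm] by (simp add: isCont_def filterlim_at_split)
      moreover have "(?f \<longlongrightarrow> 0) (at_left t)"
      proof (rule Lim_transform_eventually[OF tendsto_const])
        show "\<forall>\<^sub>F x in at_left t. 0 = ?f x"
        proof -
          have "t - 1 < t" by simp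
          from eventually_at_left_real[OF this] show ?thesis by eventually_elim (use A tr r in auto)
        qed
      qed
      ultimately show ?thesis using tendsto_unique[OF trivial_limit_at_left_real] by blast
    qed
  qed
qed

lemma int_decomp:
  fixes F :: "real \<Rightarrow> 'a::banach"
  assumes eta: "\<eta> > 0" and lohi: "lo \<le> hi" and Fc: "continuous_on UNIV F"
  shows "integral {of_int lo * \<eta> .. (of_int hi + 1) * \<eta>} F
       = (\<Sum>n\<in>{lo..hi}. integral {of_int n * \<eta> .. (of_int n + 1) * \<eta>} F)"
  using lohi
proof (induction hi rule: int_ge_induct)
  case base then show ?case by simp
next
  case (step i)
  have h1: "of_int lo * \<eta> \<le> (of_int i + 1) * \<eta>" using step eta by (simp add: mult_right_mono)
  have h2: "(of_int i + 1) * \<eta> \<le> (of_int (i + 1) + 1) * \<eta>" using eta by simp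
  have h3: "F integrable_on {of_int lo * \<eta> .. (of_int (i + 1) + 1) * \<eta>}"
    by (rule integrable_continuous_interval) (rule continuous_on_subset[OF Fc], simp)
  have "integral {of_int lo * \<eta> .. (of_int (i + 1) + 1) * \<eta>} F
      = integral {of_int lo * \<eta> .. (of_int i + 1) * \<eta>} F + integral {(of_int i + 1) * \<eta> .. (of_int (i + 1) + 1) * \<eta>} F"
    using Henstock_Kurzweil_Integration.integral_combine[OF h1 h2 h3] by simp
  also have "{lo..i + 1} = insert (i + 1) {lo..i}" using step by auto
  ultimately show ?case using step by simp
qed

lemma int_le_G:
  fixes F G :: "real \<Rightarrow> real"
  assumes FG: "\<And>x. x \<in> S \<Longrightarrow> F x \<le> G x" and G0: "\<And>x. 0 \<le> G x" and Gi: "G integrable_on UNIV"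
  shows "integral S F \<le> integral UNIV G"
proof (cases "F integrable_on S")
  case True
  have "integral S F = integral UNIV (\<lambda>x. if x \<in> S then F x else 0)"
    by (simp add: integral_restrict_UNIV)
  also have "\<dots> \<le> integral UNIV G"
    by (rule integral_le) (use True Gi FG G0 in \<open>auto simp: integrable_restrict_UNIV\<close>)
  finally show ?thesis .
next
  case False
  then have "integral S F = 0" by (simp add: not_integrable_integral)
  also have "0 \<le> integral UNIV G" by (rule integral_nonneg[OF Gi G0])
  finally show ?thesis .
qed

lemma ind_has_integral:
  fixes u w K :: real
  assumes "u \<le> w"
  shows "((\<lambda>x. if x \<in> {u..w} then K else 0) has_integral K * (w - u)) UNIV"
proof -
  have "((\<lambda>x. K) has_integral K * (w - u)) {u..w}"
    using has_integral_const_real[of K u w] assms by (simp add: mult.commute)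
  then show ?thesis by (rule has_integral_restrict_UNIV[THEN iffD2])
qed

lemma int_le_ind:
  fixes F :: "real \<Rightarrow> real"
  assumes FG: "\<And>x. x \<in> S \<Longrightarrow> F x \<le> (if x \<in> {u..w} then K else 0)" and K: "0 \<le> K" and uw: "u \<le> w"
  shows "integral S F \<le> K * (w - u)"
proof -
  have "integral S F \<le> integral UNIV (\<lambda>x. if x \<in> {u..w} then K else 0)"
    by (rule int_le_G[OF FG]) (use K ind_has_integral[OF uw, of K] in auto)
  also have "\<dots> = K * (w - u)" using ind_has_integral[OF uw, of K] by (rule integral_unique)
  finally show ?thesis .
qed

lemma opt_t:
  fixes X A B T :: real
  assumes H: "\<And>t. t > 0 \<Longrightarrow> X \<le> (t * A + B / t) / 2"
    and A: "0 \<le> A" and B: "0 \<le> B" and AB: "A * B \<le> T^2" and T: "0 \<le> T"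
  shows "X \<le> T"
proof (cases "A > 0 \<and> B > 0")
  case True
  define t where "t = sqrt (B / A)"
  have t: "t > 0" using True by (simp add: t_def)
  have "t * A = sqrt (A * B)"
    using True by (simp add: t_def real_sqrt_divide real_sqrt_mult field_simps)
  moreover have "B / t = sqrt (A * B)"
    using True by (simp add: t_def real_sqrt_divide real_sqrt_mult field_simps)
  ultimately have "X \<le> sqrt (A * B)" using H[OF t] by simp
  also have "sqrt (A * B) \<le> sqrt (T^2)" using AB by (rule real_sqrt_le_mono)
  also have "sqrt (T^2) = T" using T by simp
  finally show ?thesis .
next
  case False
  then have "A = 0 \<or> B = 0" using A B by auto
  then show ?thesis
  proof
    assume A0: "A = 0"
    show ?thesis
    proof (rule ccontr)
      assume "\<not> X \<le> T"
      then have X: "X > 0" using T by simp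
      define t where "t = B / X + 1"
      have t: "t > 0" using B X by (simp add: t_def add_nonneg_pos)
      have "X \<le> B / t / 2" using H[OF t] A0 by simp
      also have "B / t / 2 \<le> B / t"
      proof -
        have "0 \<le> B / t" using divide_nonneg_pos[OF B t] .
        moreover have "\<And>y::real. 0 \<le> y \<Longrightarrow> y / 2 \<le> y" by simp
        ultimately show ?thesis by blast
      qed
      also have "B / t < X"
        using t X B by (simp add: t_def field_simps)
      finally show False by simp
    qed
  next
    assume B0: "B = 0"
    show ?thesis
    proof (rule ccontr)
      assume "\<not> X \<le> T"
      then have X: "X > 0" using T by simp
      define t where "t = X / (A + 1)"
      have t: "t > 0" using A X by (simp add: t_def)
      have "X \<le> t * A / 2" using H[OF t] B0 by simp
      also have "t * A / 2 < X"
      proof -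
        have "0 < A * X + X * 2" using A X by (simp add: add_nonneg_pos)
        then show ?thesis using A X by (simp add: t_def field_simps)
      qed
      finally show False by simp
    qed
  qed
qed

definition lo_of :: "real \<Rightarrow> real \<Rightarrow> real \<Rightarrow> int" where "lo_of r \<eta> a = \<lfloor>(a - r) / \<eta>\<rfloor>"
definition hi_of :: "real \<Rightarrow> real \<Rightarrow> real \<Rightarrow> int" where "hi_of r \<eta> a = \<lfloor>(a + r) / \<eta>\<rfloor>"

context
  fixes v :: "real \<Rightarrow> complex" and r C0 D \<eta> :: real and jmax :: nat
  assumes smooth: "smooth_fun v"
    and r: "0 \<le> r"
    and supp: "\<And>t. \<bar>t\<bar> > r \<Longrightarrow> v t = 0"
    and C0: "\<And>t. norm (v t) \<le> C0"
    and D: "\<And>t. norm (nderiv (jmax + 1) v t) \<le> D"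
    and eta: "0 < \<eta>" "\<eta> \<le> 1"
begin

lemma vz: "\<bar>t\<bar> \<ge> r \<Longrightarrow> v t = 0"
  using nderiv_zero_out[OF smooth r supp, of t 0] by simp

lemma vcont: "continuous_on S v"
  by (rule smooth_cont0[OF smooth])

lemma C0_nonneg: "0 \<le> C0" using C0[of 0] norm_ge_zero order_trans by blast
lemma D_nonneg: "0 \<le> D" using D[of 0] norm_ge_zero order_trans by blast

lemma lohi_le: "lo_of r \<eta> a \<le> hi_of r \<eta> a"
  unfolding lo_of_def hi_of_def using eta r by (intro floor_mono divide_right_mono) auto

lemma card_lohi: "real (card {lo_of r \<eta> a .. hi_of r \<eta> a}) \<le> 2 * r / \<eta> + 2"
proof -
  have "real_of_int (hi_of r \<eta> a) \<le> (a + r) / \<eta>" unfolding hi_of_def by simp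
  moreover have "(a - r) / \<eta> < real_of_int (lo_of r \<eta> a) + 1" unfolding lo_of_def by linarith
  moreover have "(a + r) / \<eta> - (a - r) / \<eta> = 2 * r / \<eta>" by (simp add: diff_divide_distrib[symmetric])
  moreover have "real (card {lo_of r \<eta> a .. hi_of r \<eta> a}) = real_of_int (hi_of r \<eta> a - lo_of r \<eta> a + 1)"
    using lohi_le[of a] by simp
  ultimately show ?thesis by linarith
qed

lemma Ccoef_zero_gen:
  assumes "\<And>\<tau>. \<tau> \<in> {of_int n * \<eta> .. (of_int n + 1) * \<eta>} \<Longrightarrow> v (a - \<tau>) = 0"
  shows "Ccoef v \<eta> n j a = 0"
proof -
  have "Ccoef v \<eta> n j a = integral {of_int n * \<eta> .. (of_int n + 1) * \<eta>} (\<lambda>\<tau>. 0)"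
    unfolding Ccoef_Qb[OF eta(1)] by (rule integral_cong) (simp add: assms)
  then show ?thesis by simp
qed

lemma Ccoef_zero_lohi:
  assumes "n \<notin> {lo_of r \<eta> a .. hi_of r \<eta> a}"
  shows "Ccoef v \<eta> n j a = 0"
proof (rule Ccoef_zero_gen)
  fix \<tau> assume \<tau>: "\<tau> \<in> {of_int n * \<eta> .. (of_int n + 1) * \<eta>}"
  show "v (a - \<tau>) = 0"
  proof (cases "n < lo_of r \<eta> a")
    case True
    then have "of_int n + 1 \<le> real_of_int (lo_of r \<eta> a)" by linarith
    also have "real_of_int (lo_of r \<eta> a) \<le> (a - r) / \<eta>" unfolding lo_of_def by simp
    finally have "(of_int n + 1) * \<eta> \<le> a - r" using eta by (simp add: field_simps)
    then have "a - \<tau> \<ge> r" using \<tau> by simp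
    then show ?thesis using r by (intro vz) simp
  next
    case False
    then have "n > hi_of r \<eta> a" using assms by auto
    then have "real_of_int (hi_of r \<eta> a) + 1 \<le> of_int n" by linarith
    moreover have "(a + r) / \<eta> < real_of_int (hi_of r \<eta> a) + 1" unfolding hi_of_def by linarith
    ultimately have "(a + r) / \<eta> < of_int n" by simp
    then have "a + r < of_int n * \<eta>" using eta by (simp add: field_simps)
    then have "a - \<tau> < - r" using \<tau> by simp
    then show ?thesis by (intro vz) simp
  qed
qed

lemma Ccoef_zero_far:
  assumes "a < of_int n * \<eta> - r \<or> a > (of_int n + 1) * \<eta> + r"
  shows "Ccoef v \<eta> n j a = 0"
proof (rule Ccoef_zero_gen)
  fix \<tau> assume \<tau>: "\<tau> \<in> {of_int n * \<eta> .. (of_int n + 1) * \<eta>}"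
  then have "\<bar>a - \<tau>\<bar> \<ge> r" using assms by auto
  then show "v (a - \<tau>) = 0" by (rule vz)
qed

lemma Kdisc_fin:
  assumes "a = s \<or> a = s'"
  shows "Kdisc v \<eta> J s s' = (\<Sum>n\<in>{lo_of r \<eta> a .. hi_of r \<eta> a}. \<Sum>j\<le>J. Ccoef v \<eta> n j s * cnj (Ccoef v \<eta> n j s'))"
proof -
  have "Kdisc v \<eta> J s s' = infsum (\<lambda>n. \<Sum>j\<le>J. Ccoef v \<eta> n j s * cnj (Ccoef v \<eta> n j s')) {lo_of r \<eta> a .. hi_of r \<eta> a}"
    unfolding Kdisc_def
  proof (rule infsum_cong_neutral)
    fix n assume "n \<in> UNIV - {lo_of r \<eta> a .. hi_of r \<eta> a}"
    then have "n \<notin> {lo_of r \<eta> a .. hi_of r \<eta> a}" by simp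
    from Ccoef_zero_lohi[OF this] assms
    show "(\<Sum>j\<le>J. Ccoef v \<eta> n j s * cnj (Ccoef v \<eta> n j s')) = 0" by auto
  qed auto
  then show ?thesis by simp
qed

lemma Kvac_decomp:
  "Kvac v s s' = (\<Sum>n\<in>{lo_of r \<eta> s' .. hi_of r \<eta> s'}.
       integral {of_int n * \<eta> .. (of_int n + 1) * \<eta>} (\<lambda>\<tau>. v (s - \<tau>) * cnj (v (s' - \<tau>))))"
proof -
  define lo where "lo = lo_of r \<eta> s'"
  define hi where "hi = hi_of r \<eta> s'"
  define F where "F \<tau> = v (s - \<tau>) * cnj (v (s' - \<tau>))" for \<tau>
  have Fc: "continuous_on UNIV F" unfolding F_def
    by (intro continuous_intros continuous_on_compose2[OF vcont[of UNIV]]) auto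
  have F0: "F \<tau> = 0" if "\<tau> \<notin> {of_int lo * \<eta> .. (of_int hi + 1) * \<eta>}" for \<tau>
  proof -
    have "\<tau> < of_int lo * \<eta> \<or> \<tau> > (of_int hi + 1) * \<eta>" using that by auto
    then have "\<bar>s' - \<tau>\<bar> \<ge> r"
    proof
      assume "\<tau> < of_int lo * \<eta>"
      moreover have "real_of_int lo \<le> (s' - r) / \<eta>" unfolding lo_def lo_of_def by simp
      then have "of_int lo * \<eta> \<le> s' - r" using eta by (simp add: field_simps)
      ultimately show ?thesis by simp
    next
      assume a: "\<tau> > (of_int hi + 1) * \<eta>"
      have "(s' + r) / \<eta> < real_of_int hi + 1" unfolding hi_def hi_of_def by linarith
      then have "s' + r < (of_int hi + 1) * \<eta>" using eta by (simp add: field_simps)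
      with a show ?thesis by simp
    qed
    then show ?thesis unfolding F_def using vz by simp
  qed
  have "Kvac v s s' = integral UNIV F" unfolding Kvac_def F_def ..
  also have "\<dots> = integral UNIV (\<lambda>\<tau>. if \<tau> \<in> {of_int lo * \<eta> .. (of_int hi + 1) * \<eta>} then F \<tau> else 0)"
    by (rule integral_cong) (use F0 in auto)
  also have "\<dots> = integral {of_int lo * \<eta> .. (of_int hi + 1) * \<eta>} F"
    by (rule integral_restrict_UNIV)
  also have "\<dots> = (\<Sum>n\<in>{lo..hi}. integral {of_int n * \<eta> .. (of_int n + 1) * \<eta>} F)"
    by (rule int_decomp[OF eta(1) _ Fc]) (simp add: lo_def hi_def lohi_le)
  finally show ?thesis unfolding F_def lo_def hi_def .
qed

lemma vcomp[continuous_intros]: "continuous_on S (\<lambda>\<tau>. v (a - \<tau>))"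
  by (intro continuous_on_compose2[OF vcont[of UNIV]] continuous_intros) auto

lemma interval_bound:
  assumes t: "t > 0"
  shows "norm ((\<Sum>j\<le>J. Ccoef v \<eta> n j s * cnj (Ccoef v \<eta> n j s'))
            - integral {of_int n * \<eta> .. (of_int n + 1) * \<eta>} (\<lambda>\<tau>. v (s - \<tau>) * cnj (v (s' - \<tau>))))
     \<le> (t * integral {of_int n * \<eta> .. (of_int n + 1) * \<eta>} (\<lambda>\<tau>. (norm (v (s - \<tau>) - (\<Sum>j\<le>J. d j * complex_of_real (Qb \<eta> n j \<tau>))))^2)
         + integral {of_int n * \<eta> .. (of_int n + 1) * \<eta>} (\<lambda>\<tau>. (norm (v (s' - \<tau>)))^2) / t) / 2"
  unfolding Ccoef_Qb[OF eta(1)]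
  by (rule proj_bound[OF Qb_cont[OF eta(1)] Qb_orth[OF eta(1)] vcomp vcomp t])

lemma M_bound: "norm (v t) \<le> D * r^(jmax + 1) / fact (jmax + 1)"
proof (cases "\<bar>t\<bar> < r")
  case False
  then have "v t = 0" using vz by simp
  then show ?thesis using D_nonneg r by simp
next
  case True
  define c where "c = (if t \<ge> 0 then r else - r)"
  have cr: "\<bar>c\<bar> \<ge> r" unfolding c_def by simp
  have tc: "\<bar>t - c\<bar> \<le> r" using True unfolding c_def by auto
  have der: "\<And>m t. m \<le> jmax \<Longrightarrow> ((\<lambda>m. nderiv m v) m has_vector_derivative (\<lambda>m. nderiv m v) (Suc m) t) (at t)"
    using smooth_deriv[OF smooth] by simp
  have Db: "\<And>t. norm ((\<lambda>m. nderiv m v) (Suc jmax) t) \<le> D" using D by simp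
  from taylor_bound[of jmax "\<lambda>m. nderiv m v", OF der Db, of t c]
  have "norm (v t - (\<Sum>i\<le>jmax. ((t - c)^i / fact i) *\<^sub>R nderiv i v c)) \<le> D * \<bar>t - c\<bar>^(Suc jmax) / fact (Suc jmax)"
    by simp
  moreover have "nderiv i v c = 0" for i using nderiv_zero_out[OF smooth r supp cr] .
  ultimately have "norm (v t) \<le> D * \<bar>t - c\<bar>^(Suc jmax) / fact (Suc jmax)" by simp
  also have "\<dots> \<le> D * r^(Suc jmax) / fact (Suc jmax)"
    by (intro divide_right_mono mult_left_mono power_mono tc D_nonneg) auto
  finally show ?thesis by simp
qed

lemma taylor_choice:
  "\<exists>d. \<forall>\<tau>\<in>{of_int n * \<eta> .. (of_int n + 1) * \<eta>}.
     norm (v (s - \<tau>) - (\<Sum>j\<le>jmax. d j * complex_of_real (Qb \<eta> n j \<tau>))) \<le> D * (\<eta> / 2)^(jmax + 1) / fact (jmax + 1)"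
proof -
  define c where "c = s - (of_int n * \<eta> + \<eta> / 2)"
  define w where "w i = nderiv i v c" for i
  obtain e where e: "\<And>x. (\<Sum>i\<le>jmax. ((- (\<eta> / 2) * x + 0)^i / fact i) *\<^sub>R w i)
       = (\<Sum>j\<le>jmax. e j * complex_of_real (legendre j x))"
    using inspan_taylor[of jmax "- (\<eta> / 2)" 0 w] unfolding inspan_def by blast
  define sq where "sq j = sqrt ((2 * real j + 1) / \<eta>)" for j
  have sq0: "sq j \<noteq> 0" for j unfolding sq_def using eta by simp
  define d where "d j = e j / complex_of_real (sq j)" for j
  show ?thesis
  proof (rule exI[of _ d], intro ballI)
    fix \<tau> assume \<tau>: "\<tau> \<in> {of_int n * \<eta> .. (of_int n + 1) * \<eta>}"
    define x where "x = 2 * ((\<tau> - of_int n * \<eta>) / \<eta>) - 1"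
    have sx: "s - \<tau> - c = - (\<eta> / 2) * x + 0" unfolding x_def c_def using eta by (simp add: field_simps)
    have "(\<Sum>j\<le>jmax. d j * complex_of_real (Qb \<eta> n j \<tau>)) = (\<Sum>j\<le>jmax. e j * complex_of_real (legendre j x))"
      by (rule sum.cong[OF refl]) (simp add: d_def Qb_def x_def sq_def[symmetric] sq0)
    also have "\<dots> = (\<Sum>i\<le>jmax. ((s - \<tau> - c)^i / fact i) *\<^sub>R nderiv i v c)"
      unfolding sx e[symmetric] w_def ..
    finally have eqT: "(\<Sum>j\<le>jmax. d j * complex_of_real (Qb \<eta> n j \<tau>)) = (\<Sum>i\<le>jmax. ((s - \<tau> - c)^i / fact i) *\<^sub>R nderiv i v c)" .
    have der: "\<And>m t. m \<le> jmax \<Longrightarrow> ((\<lambda>m. nderiv m v) m has_vector_derivative (\<lambda>m. nderiv m v) (Suc m) t) (at t)"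
      using smooth_deriv[OF smooth] by simp
    have Db: "\<And>t. norm ((\<lambda>m. nderiv m v) (Suc jmax) t) \<le> D" using D by simp
    from taylor_bound[of jmax "\<lambda>m. nderiv m v", OF der Db, of "s - \<tau>" c]
    have "norm (v (s - \<tau>) - (\<Sum>i\<le>jmax. ((s - \<tau> - c)^i / fact i) *\<^sub>R nderiv i v c)) \<le> D * \<bar>s - \<tau> - c\<bar>^(Suc jmax) / fact (Suc jmax)"
      by simp
    also have "\<dots> \<le> D * (\<eta> / 2)^(Suc jmax) / fact (Suc jmax)"
    proof -
      have "\<bar>s - \<tau> - c\<bar> \<le> \<eta> / 2" using \<tau> unfolding c_def by (auto simp: field_simps abs_le_iff)
      then show ?thesis by (intro divide_right_mono mult_left_mono power_mono D_nonneg) auto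
    qed
    finally show "norm (v (s - \<tau>) - (\<Sum>j\<le>jmax. d j * complex_of_real (Qb \<eta> n j \<tau>))) \<le> D * (\<eta> / 2)^(jmax + 1) / fact (jmax + 1)"
      unfolding eqT by simp
  qed
qed

lemma sq_int_bound:
  assumes Mb: "\<And>t. norm (v t) \<le> Mb" and Mb0: "0 \<le> Mb"
  shows "integral S (\<lambda>\<tau>. (norm (v (a - \<tau>)))^2) \<le> Mb^2 * ((a + r) - (a - r))"
proof (rule int_le_ind)
  fix \<tau>
  show "(norm (v (a - \<tau>)))^2 \<le> (if \<tau> \<in> {a - r .. a + r} then Mb^2 else 0)"
  proof (cases "\<tau> \<in> {a - r .. a + r}")
    case True
    then show ?thesis using Mb[of "a - \<tau>"] by (simp add: power_mono)
  next
    case False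
    then have "\<bar>a - \<tau>\<bar> \<ge> r" by auto
    then show ?thesis using vz by simp
  qed
qed (use r in auto)

lemma main_pt: "norm (Kdisc v \<eta> jmax s s' - Kvac v s s') \<le> 2 * \<eta>^(jmax + 1) * D * C0 * r / fact (jmax + 1)"
proof -
  define N where "N = {lo_of r \<eta> s' .. hi_of r \<eta> s'}"
  define I where "I n = {of_int n * \<eta> .. (of_int n + 1) * \<eta>}" for n :: int
  define \<Delta> where "\<Delta> n = (\<Sum>j\<le>jmax. Ccoef v \<eta> n j s * cnj (Ccoef v \<eta> n j s')) - integral (I n) (\<lambda>\<tau>. v (s - \<tau>) * cnj (v (s' - \<tau>)))" for n
  define B where "B n = integral (I n) (\<lambda>\<tau>. (norm (v (s' - \<tau>)))^2)" for n
  define BIG where "BIG = {of_int (lo_of r \<eta> s') * \<eta> .. (of_int (hi_of r \<eta> s') + 1) * \<eta>}"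
  define P where "P = \<eta>^(jmax + 1) / fact (jmax + 1)"
  define T where "T = 2 * \<eta>^(jmax + 1) * D * C0 * r / fact (jmax + 1)"
  have T_eq: "T = 2 * r * D * C0 * P" unfolding T_def P_def by simp
  have P0: "0 \<le> P" unfolding P_def using eta by simp
  have T0: "0 \<le> T" unfolding T_eq using r D_nonneg C0_nonneg P0 by simp
  have T2: "T^2 = 4 * (r^2 * C0^2 * (D * P)^2)" unfolding T_eq by (simp add: power_mult_distrib)
  have eqK: "Kdisc v \<eta> jmax s s' - Kvac v s s' = (\<Sum>n\<in>N. \<Delta> n)"
    unfolding Kdisc_fin[of s' s s' jmax, OF disjI2[OF refl]] Kvac_decomp N_def \<Delta>_def I_def by (simp add: sum_subtractf)
  have sumI: "(\<Sum>n\<in>N. integral (I n) (\<lambda>\<tau>. (norm (v (a - \<tau>)))^2)) = integral BIG (\<lambda>\<tau>. (norm (v (a - \<tau>)))^2)" for a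
    unfolding N_def I_def BIG_def by (rule int_decomp[symmetric, OF eta(1) lohi_le]) (intro continuous_intros)
  have SB: "(\<Sum>n\<in>N. B n) \<le> C0^2 * (2 * r)"
    unfolding B_def sumI using sq_int_bound[OF C0 C0_nonneg, of BIG s'] by simp
  have B0: "0 \<le> (\<Sum>n\<in>N. B n)" unfolding B_def sumI
    by (rule integral_nonneg) (auto intro!: integrable_continuous_interval continuous_intros simp: BIG_def)
  have gen: "norm (\<Sum>n\<in>N. \<Delta> n) \<le> (t * (\<Sum>n\<in>N. A n) + (\<Sum>n\<in>N. B n) / t) / 2"
    if t: "t > 0" and Ab: "\<And>n. norm (\<Delta> n) \<le> (t * A n + B n / t) / 2" for t A
  proof -
    have "norm (\<Sum>n\<in>N. \<Delta> n) \<le> (\<Sum>n\<in>N. norm (\<Delta> n))" by (rule norm_sum)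
    also have "\<dots> \<le> (\<Sum>n\<in>N. (t * A n + B n / t) / 2)" by (rule sum_mono) (rule Ab)
    also have "\<dots> = (t * (\<Sum>n\<in>N. A n) + (\<Sum>n\<in>N. B n) / t) / 2"
      by (simp only: sum_divide_distrib[symmetric] sum_distrib_left sum.distrib)
    finally show ?thesis .
  qed
  show ?thesis
  proof (cases "\<eta> \<le> r")
    case True
    obtain dd where dd: "\<And>n. \<forall>\<tau>\<in>I n. norm (v (s - \<tau>) - (\<Sum>j\<le>jmax. dd n j * complex_of_real (Qb \<eta> n j \<tau>))) \<le> D * (\<eta> / 2)^(jmax + 1) / fact (jmax + 1)"
      using taylor_choice[of _ s] unfolding I_def by metis
    define E where "E = D * (\<eta> / 2)^(jmax + 1) / fact (jmax + 1)"
    have E0: "0 \<le> E" unfolding E_def using D_nonneg eta by simp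
    define A where "A n = integral (I n) (\<lambda>\<tau>. (norm (v (s - \<tau>) - (\<Sum>j\<le>jmax. dd n j * complex_of_real (Qb \<eta> n j \<tau>))))^2)" for n
    have An: "A n \<le> \<eta> * E^2" for n
    proof -
      have "A n \<le> integral (I n) (\<lambda>\<tau>. E^2)"
        unfolding A_def
      proof (rule integral_le)
        show "(\<lambda>\<tau>. (norm (v (s - \<tau>) - (\<Sum>j\<le>jmax. dd n j * complex_of_real (Qb \<eta> n j \<tau>))))^2) integrable_on I n"
          unfolding I_def by (intro integrable_continuous_interval continuous_intros Qb_cont eta(1))
        show "(\<lambda>\<tau>. E^2) integrable_on I n" unfolding I_def by (rule integrable_const_ivl)
        fix \<tau> assume "\<tau> \<in> I n"
        then show "(norm (v (s - \<tau>) - (\<Sum>j\<le>jmax. dd n j * complex_of_real (Qb \<eta> n j \<tau>))))^2 \<le> E^2"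
          using dd[of n] unfolding E_def by (intro power_mono) auto
      qed
      also have "\<dots> = \<eta> * E^2" unfolding I_def using eta by (simp add: algebra_simps)
      finally show ?thesis .
    qed
    have SA: "(\<Sum>n\<in>N. A n) \<le> real (card N) * (\<eta> * E^2)"
      using sum_mono[of N A "\<lambda>_. \<eta> * E^2"] An by simp
    have A0: "0 \<le> (\<Sum>n\<in>N. A n)" unfolding A_def
      by (intro sum_nonneg integral_nonneg) (auto intro!: integrable_continuous_interval continuous_intros Qb_cont eta(1) simp: I_def)
    have h1: "real (card N) * \<eta> \<le> 4 * r"
    proof -
      have "real (card N) * \<eta> \<le> (2 * r / \<eta> + 2) * \<eta>"
        unfolding N_def using card_lohi eta by (intro mult_right_mono) auto
      also have "\<dots> = 2 * r + 2 * \<eta>" using eta by (simp add: field_simps)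
      finally show ?thesis using True by simp
    qed
    have h2: "4 * E^2 \<le> (D * P)^2"
    proof -
      have "E * 2^(jmax + 1) = D * P" unfolding E_def P_def by (simp add: power_divide)
      moreover have "E * 2 \<le> E * 2^(jmax + 1)"
        using E0 by (intro mult_left_mono) (simp_all add: self_le_power)
      ultimately have "E * 2 \<le> D * P" by simp
      then have "(E * 2)^2 \<le> (D * P)^2" using E0 by (intro power_mono) auto
      then show ?thesis by (simp add: power_mult_distrib)
    qed
    have "norm (\<Sum>n\<in>N. \<Delta> n) \<le> T"
    proof (rule opt_t[OF _ A0 B0 _ T0])
      fix t :: real assume t: "t > 0"
      show "norm (\<Sum>n\<in>N. \<Delta> n) \<le> (t * (\<Sum>n\<in>N. A n) + (\<Sum>n\<in>N. B n) / t) / 2"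
        by (rule gen[OF t]) (unfold \<Delta>_def A_def B_def I_def, rule interval_bound[OF t])
    next
      have "(\<Sum>n\<in>N. A n) * (\<Sum>n\<in>N. B n) \<le> (real (card N) * (\<eta> * E^2)) * (C0^2 * (2 * r))"
        by (rule mult_mono[OF SA SB]) (use B0 eta in auto)
      also have "\<dots> = (real (card N) * \<eta>) * (E^2 * C0^2 * (2 * r))" by (simp add: algebra_simps)
      also have "\<dots> \<le> (4 * r) * (E^2 * C0^2 * (2 * r))"
        by (rule mult_right_mono[OF h1]) (use r in auto)
      also have "\<dots> = 2 * (r^2 * C0^2) * (4 * E^2)" by (simp add: algebra_simps power2_eq_square)
      also have "\<dots> \<le> 2 * (r^2 * C0^2) * (D * P)^2"
        by (rule mult_left_mono[OF h2]) simp
      also have "\<dots> \<le> T^2" unfolding T2 by simp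
      finally show "(\<Sum>n\<in>N. A n) * (\<Sum>n\<in>N. B n) \<le> T^2" .
    qed
    then show ?thesis unfolding eqK T_def .
  next
    case False
    define M where "M = D * r^(jmax + 1) / fact (jmax + 1)"
    have M0: "0 \<le> M" unfolding M_def using D_nonneg r by simp
    define A where "A n = integral (I n) (\<lambda>\<tau>. (norm (v (s - \<tau>) - (\<Sum>j\<le>jmax. 0 * complex_of_real (Qb \<eta> n j \<tau>))))^2)" for n
    have SA: "(\<Sum>n\<in>N. A n) \<le> M^2 * (2 * r)"
      unfolding A_def using sq_int_bound[OF M_bound M0[unfolded M_def], of BIG s] sumI[of s] by (simp add: M_def)
    have A0: "0 \<le> (\<Sum>n\<in>N. A n)" unfolding A_def
      by (intro sum_nonneg integral_nonneg) (auto intro!: integrable_continuous_interval continuous_intros simp: I_def)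
    have hM: "M \<le> D * P"
    proof -
      have "D * r^(jmax + 1) / fact (jmax + 1) \<le> D * \<eta>^(jmax + 1) / fact (jmax + 1)"
        using False r D_nonneg by (intro divide_right_mono mult_left_mono power_mono) auto
      then show ?thesis unfolding M_def P_def by simp
    qed
    have "norm (\<Sum>n\<in>N. \<Delta> n) \<le> T"
    proof (rule opt_t[OF _ A0 B0 _ T0])
      fix t :: real assume t: "t > 0"
      show "norm (\<Sum>n\<in>N. \<Delta> n) \<le> (t * (\<Sum>n\<in>N. A n) + (\<Sum>n\<in>N. B n) / t) / 2"
        by (rule gen[OF t]) (unfold \<Delta>_def A_def B_def I_def, rule interval_bound[OF t])
    next
      have "(\<Sum>n\<in>N. A n) * (\<Sum>n\<in>N. B n) \<le> (M^2 * (2 * r)) * (C0^2 * (2 * r))"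
        by (rule mult_mono[OF SA SB]) (use B0 r in auto)
      also have "\<dots> = 4 * (r^2 * C0^2 * M^2)" by (simp add: algebra_simps power2_eq_square)
      also have "\<dots> \<le> 4 * (r^2 * C0^2 * (D * P)^2)"
        using hM M0 by (intro mult_left_mono power_mono) auto
      also have "\<dots> = T^2" unfolding T2 ..
      finally show "(\<Sum>n\<in>N. A n) * (\<Sum>n\<in>N. B n) \<le> T^2" .
    qed
    then show ?thesis unfolding eqK T_def .
  qed
qed

lemma far_zero:
  assumes far: "\<bar>s - s'\<bar> > 2 * r + \<eta>"
  shows "Kdisc v \<eta> jmax s s' - Kvac v s s' = 0"
proof -
  have "Kdisc v \<eta> jmax s s' = 0"
    unfolding Kdisc_def
  proof (rule infsum_0)
    fix n :: int
    show "(\<Sum>j\<le>jmax. Ccoef v \<eta> n j s * cnj (Ccoef v \<eta> n j s')) = 0"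
    proof (rule sum.neutral, intro ballI)
      fix j
      show "Ccoef v \<eta> n j s * cnj (Ccoef v \<eta> n j s') = 0"
      proof (cases "s < of_int n * \<eta> - r \<or> s > (of_int n + 1) * \<eta> + r")
        case True then show ?thesis using Ccoef_zero_far by simp
      next
        case False
        then have "s' < of_int n * \<eta> - r \<or> s' > (of_int n + 1) * \<eta> + r"
          using far by (auto simp: algebra_simps abs_if split: if_splits)
        then show ?thesis using Ccoef_zero_far by simp
      qed
    qed
  qed
  moreover have "Kvac v s s' = 0"
  proof -
    have "v (s - \<tau>) * cnj (v (s' - \<tau>)) = 0" for \<tau>
    proof -
      have "\<bar>s - \<tau>\<bar> \<ge> r \<or> \<bar>s' - \<tau>\<bar> \<ge> r" using far r eta(1) by (auto simp: abs_if split: if_splits)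
      then show ?thesis using vz by auto
    qed
    then have "(\<lambda>\<tau>. v (s - \<tau>) * cnj (v (s' - \<tau>))) = (\<lambda>\<tau>. 0)" by (simp only: fun_eq_iff) simp
    then show ?thesis unfolding Kvac_def by simp
  qed
  ultimately show ?thesis by simp
qed

lemma claim2:
  assumes t: "t > 0"
  shows "integral {0..t} (\<lambda>s'. integral {0..t} (\<lambda>s. norm (Kdisc v \<eta> jmax s s' - Kvac v s s')))
     \<le> 4 * t * \<eta> ^ (jmax + 1) * D * (2 * r + \<eta>) / fact (jmax + 1) * C0 * r"
proof -
  define B1 where "B1 = 2 * \<eta>^(jmax + 1) * D * C0 * r / fact (jmax + 1)"
  define W where "W = 2 * r + \<eta>"
  have B10: "0 \<le> B1" unfolding B1_def using eta D_nonneg C0_nonneg r by simp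
  have W0: "0 \<le> W" unfolding W_def using eta r by simp
  have inner: "integral {0..t} (\<lambda>s. norm (Kdisc v \<eta> jmax s s' - Kvac v s s')) \<le> B1 * ((s' + W) - (s' - W))" for s'
  proof (rule int_le_ind)
    fix s
    show "norm (Kdisc v \<eta> jmax s s' - Kvac v s s') \<le> (if s \<in> {s' - W .. s' + W} then B1 else 0)"
    proof (cases "s \<in> {s' - W .. s' + W}")
      case True then show ?thesis using main_pt[of s s'] unfolding B1_def by simp
    next
      case False
      then have "\<bar>s - s'\<bar> > 2 * r + \<eta>" unfolding W_def by auto
      then have "norm (Kdisc v \<eta> jmax s s' - Kvac v s s') = 0" using far_zero by simp
      then show ?thesis by (subst if_not_P[OF False]) simp
    qed
  qed (use B10 W0 in auto)
  have "integral {0..t} (\<lambda>s'. integral {0..t} (\<lambda>s. norm (Kdisc v \<eta> jmax s s' - Kvac v s s')))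
      \<le> (B1 * (2 * W)) * (t - 0)"
  proof (rule int_le_ind)
    fix s' assume "s' \<in> {0..t}"
    then show "integral {0..t} (\<lambda>s. norm (Kdisc v \<eta> jmax s s' - Kvac v s s')) \<le> (if s' \<in> {0..t} then B1 * (2 * W) else 0)"
      using inner[of s'] by simp
  qed (use B10 W0 t in auto)
  also have "\<dots> = 4 * t * \<eta> ^ (jmax + 1) * D * (2 * r + \<eta>) / fact (jmax + 1) * C0 * r"
    unfolding B1_def W_def by (simp add: field_simps)
  finally show ?thesis .
qed

lemma Ccoef_bound: "norm (Ccoef v \<eta> n j a) \<le> C0 * sqrt \<eta>"
proof -
  define I where "I = {of_int n * \<eta> .. (of_int n + 1) * \<eta>}"
  define q where "q = sqrt \<eta>"
  have q: "q > 0" unfolding q_def using eta by simp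
  have qq: "q * q = \<eta>" unfolding q_def using eta by simp
  define g where "g \<tau> = (C0 * q / 2) * (Qb \<eta> n j \<tau> * Qb \<eta> n j \<tau>) + C0 / (2 * q)" for \<tau>
  have "norm (Ccoef v \<eta> n j a) \<le> integral I g"
    unfolding Ccoef_Qb[OF eta(1)] I_def[symmetric]
  proof (rule integral_norm_bound_integral)
    show "(\<lambda>\<tau>. v (a - \<tau>) * complex_of_real (Qb \<eta> n j \<tau>)) integrable_on I"
      unfolding I_def by (intro integrable_continuous_interval continuous_intros Qb_cont eta(1))
    show "g integrable_on I"
      unfolding I_def g_def by (intro integrable_continuous_interval continuous_intros Qb_cont eta(1))
    fix \<tau>
    have "norm (v (a - \<tau>) * complex_of_real (Qb \<eta> n j \<tau>)) = norm (v (a - \<tau>)) * \<bar>Qb \<eta> n j \<tau>\<bar>"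
      by (simp add: norm_mult)
    also have "\<dots> \<le> C0 * \<bar>Qb \<eta> n j \<tau>\<bar>" by (rule mult_right_mono[OF C0]) simp
    also have "\<dots> \<le> C0 * ((q * \<bar>Qb \<eta> n j \<tau>\<bar>^2 + 1^2 / q) / 2)"
      using amgm_t[OF q, of "\<bar>Qb \<eta> n j \<tau>\<bar>" 1] C0_nonneg by (intro mult_left_mono) auto
    also have "\<dots> = g \<tau>" unfolding g_def using q by (simp add: field_simps power2_eq_square)
    finally show "norm (v (a - \<tau>) * complex_of_real (Qb \<eta> n j \<tau>)) \<le> g \<tau>" .
  qed
  also have "integral I g = (C0 * q / 2) * integral I (\<lambda>\<tau>. Qb \<eta> n j \<tau> * Qb \<eta> n j \<tau>) + integral I (\<lambda>\<tau>. C0 / (2 * q))"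
    unfolding g_def
    by (subst integral_add) (auto intro!: integrable_continuous_interval continuous_intros Qb_cont eta(1) simp: I_def)
  also have "integral I (\<lambda>\<tau>. Qb \<eta> n j \<tau> * Qb \<eta> n j \<tau>) = 1" unfolding I_def using Qb_orth[OF eta(1)] by simp
  also have "integral I (\<lambda>\<tau>. C0 / (2 * q)) = \<eta> * (C0 / (2 * q))" unfolding I_def using eta by (simp add: algebra_simps)
  also have "(C0 * q / 2) * 1 + \<eta> * (C0 / (2 * q)) = C0 * q" using q qq by (simp add: field_simps)
  finally show ?thesis unfolding q_def .
qed

lemma claim3:
  "integral UNIV (\<lambda>s'. norm (Kdisc v \<eta> jmax s s')) \<le> 2 * C0\<^sup>2 * (real jmax + 1) * (2 * r + 1)\<^sup>2"
proof -
  define N where "N = {lo_of r \<eta> s .. hi_of r \<eta> s}"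
  define K where "K = (real jmax + 1) * (C0^2 * \<eta>)"
  define G where "G x = (\<Sum>n\<in>N. if x \<in> {of_int n * \<eta> - r .. (of_int n + 1) * \<eta> + r} then K else 0)" for x
  have K0: "0 \<le> K" unfolding K_def using eta by simp
  have each: "((\<lambda>x. if x \<in> {of_int n * \<eta> - r .. (of_int n + 1) * \<eta> + r} then K else 0) has_integral
      K * (((of_int n + 1) * \<eta> + r) - (of_int n * \<eta> - r))) UNIV" for n :: int
    by (rule ind_has_integral) (use r eta in \<open>simp add: algebra_simps\<close>)
  have Gint: "(G has_integral (\<Sum>n\<in>N. K * (((of_int n + 1) * \<eta> + r) - (of_int n * \<eta> - r)))) UNIV"
    unfolding G_def by (rule has_integral_sum[OF _ each]) (simp add: N_def)
  have "integral UNIV (\<lambda>s'. norm (Kdisc v \<eta> jmax s s')) \<le> integral UNIV G"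
  proof (rule int_le_G)
    fix s'
    have "norm (Kdisc v \<eta> jmax s s') \<le> (\<Sum>n\<in>N. \<Sum>j\<le>jmax. norm (Ccoef v \<eta> n j s * cnj (Ccoef v \<eta> n j s')))"
      unfolding Kdisc_fin[of s s s' jmax, OF disjI1[OF refl]] N_def[symmetric]
      by (rule order_trans[OF norm_sum sum_mono]) (rule norm_sum)
    also have "\<dots> \<le> (\<Sum>n\<in>N. \<Sum>j\<le>jmax. if s' \<in> {of_int n * \<eta> - r .. (of_int n + 1) * \<eta> + r} then C0^2 * \<eta> else 0)"
    proof (intro sum_mono)
      fix n j
      show "norm (Ccoef v \<eta> n j s * cnj (Ccoef v \<eta> n j s')) \<le> (if s' \<in> {of_int n * \<eta> - r .. (of_int n + 1) * \<eta> + r} then C0^2 * \<eta> else 0)"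
      proof (cases "s' \<in> {of_int n * \<eta> - r .. (of_int n + 1) * \<eta> + r}")
        case True
        have "norm (Ccoef v \<eta> n j s * cnj (Ccoef v \<eta> n j s')) = norm (Ccoef v \<eta> n j s) * norm (Ccoef v \<eta> n j s')"
          by (simp add: norm_mult)
        also have "\<dots> \<le> (C0 * sqrt \<eta>) * (C0 * sqrt \<eta>)"
          by (rule mult_mono[OF Ccoef_bound Ccoef_bound]) (use C0_nonneg eta in auto)
        also have "\<dots> = C0^2 * \<eta>" using eta by (simp add: power2_eq_square algebra_simps)
        finally show ?thesis using True by simp
      next
        case False
        then have "s' < of_int n * \<eta> - r \<or> s' > (of_int n + 1) * \<eta> + r" by auto
        then have "Ccoef v \<eta> n j s' = 0" by (rule Ccoef_zero_far)
        then show ?thesis by (subst if_not_P[OF False]) simp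
      qed
    qed
    also have "\<dots> = G s'" unfolding G_def K_def by (rule sum.cong) auto
    finally show "norm (Kdisc v \<eta> jmax s s') \<le> G s'" .
  next
    show "0 \<le> G x" for x unfolding G_def using K0 by (intro sum_nonneg) auto
    show "G integrable_on UNIV" using Gint by blast
  qed
  also have "integral UNIV G = real (card N) * (K * (\<eta> + 2 * r))"
    using integral_unique[OF Gint] by (simp add: algebra_simps)
  also have "\<dots> = (real (card N) * \<eta>) * ((real jmax + 1) * C0^2 * (\<eta> + 2 * r))"
    unfolding K_def by (simp add: algebra_simps)
  also have "\<dots> \<le> (2 * r + 2 * \<eta>) * ((real jmax + 1) * C0^2 * (\<eta> + 2 * r))"
  proof (rule mult_right_mono)
    have "real (card N) * \<eta> \<le> (2 * r / \<eta> + 2) * \<eta>"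
      unfolding N_def using card_lohi eta by (intro mult_right_mono) auto
    also have "\<dots> = 2 * r + 2 * \<eta>" using eta by (simp add: field_simps)
    finally show "real (card N) * \<eta> \<le> 2 * r + 2 * \<eta>" .
  qed (use eta r in auto)
  also have "\<dots> \<le> (2 * (2 * r + 1)) * ((real jmax + 1) * C0^2 * (2 * r + 1))"
    using eta r by (intro mult_mono mult_left_mono) auto
  also have "\<dots> = 2 * C0\<^sup>2 * (real jmax + 1) * (2 * r + 1)\<^sup>2" by (simp add: power2_eq_square algebra_simps)
  finally show ?thesis .
qed

end

theorem lemma2:
  fixes v :: "real \<Rightarrow> complex" and r C0 D \<eta> :: real and jmax :: nat
  assumes smooth: "smooth_fun v"
    and r: "0 \<le> r"
    and supp: "\<And>t. \<bar>t\<bar> > r \<Longrightarrow> v t = 0"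
    and C0: "\<And>t. norm (v t) \<le> C0"
    and D: "\<And>t. norm (nderiv (jmax + 1) v t) \<le> D"
    and eta: "0 < \<eta>" "\<eta> \<le> 1"
  shows "(\<forall>s s'. norm (Kdisc v \<eta> jmax s s' - Kvac v s s')
            \<le> 2 * \<eta> ^ (jmax + 1) * D * C0 * r / fact (jmax + 1))
       \<and> (\<forall>t>0. integral {0..t} (\<lambda>s'. integral {0..t} (\<lambda>s. norm (Kdisc v \<eta> jmax s s' - Kvac v s s')))
            \<le> 4 * t * \<eta> ^ (jmax + 1) * D * (2 * r + \<eta>) / fact (jmax + 1) * C0 * r)
       \<and> (\<forall>s. integral UNIV (\<lambda>s'. norm (Kdisc v \<eta> jmax s s'))
            \<le> 2 * C0\<^sup>2 * (real jmax + 1) * (2 * r + 1)\<^sup>2)"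
  using main_pt[OF smooth r supp C0 D eta] claim2[OF smooth r supp C0 D eta]
    claim3[OF smooth r supp C0 D eta] by blast

end
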